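(* Let $U_p^*,U_g^*\in\mathbb{R}^{d\times r}$ with $U_p^*$ of rank $r$, $\Delta_U^*=U_g^*-U_p^*$, and let $X_p=\mathcal{A}_p(U_p^*U_p^{*T})+\epsilon_p\in\mathbb{R}^{d^2n_p}$ where $\mathcal{A}_p:\mathbb{R}^{d\times d}\to\mathbb{R}^{d^2n_p}$ is a fixed linear operator satisfying $2r$-RWC$(\alpha_p/d^2,\beta_p/d^2)$ and $\epsilon_p$ has independent $\frac d2$-subgaussian entries. Let $\widehat U_p$ be a global minimizer of $\frac1{d^2n_p}\|X_p-\mathcal{A}_p(UU^T)\|^2$ over $U\in\mathbb{R}^{d\times r}$ and $\omega=\|U_p^*(R_{(\widehat U_p,U_p^* )}-R_{(\widehat U_p,U_g^* )})\|_{2,1}$. Then for $\delta\in(0,1)$, with probability at least $1-\delta$, $$\ell(\widehat U_p,U_g^* )\le\|\Delta_U^*\|_{2,1}+\omega+\frac{8d\sqrt{2\beta_p}}{(3\alpha_p-2\beta_p)\sigma_r(U_p^* )}\sqrt{\frac{d\big(2r(2d+1)\log(36\sqrt2)+\log\frac2\delta\big)}{n_p}},$$ in particular $\ell(\widehat U_p,U_g^* )=\mathcal O\big(\|\Delta_U^*\|_{2,1}+\omega+d\sqrt{(d^2+d\log(1/\delta))/n_p}\big)$.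
   Context: Notation: $\Theta^j$ is the $j$-th row of $\Theta$; $\|\Theta\|_{2,1}=\sum_j\|\Theta^j\|$; $\|\Theta\|_F$ Frobenius norm; $\sigma_r$ the $r$-th largest singular value. A linear operator $\mathcal{A}:\mathbb{R}^{d\times d}\to\mathbb{R}^n$ is given by fixed matrices $A_i$ via $\mathcal{A}(\Theta)_i=\langle A_i,\Theta\rangle$. $\mathcal{A}$ satisfies $k$-RWC$(\alpha,\beta)$ if $3\alpha>2\beta$ and $\alpha\|Z\|_F^2\le\frac1n\|\mathcal{A}(Z)\|^2\le\beta\|Z\|_F^2$ for all $Z$ with rank$(Z)\le k$. A real random variable $z$ is $\sigma$-subgaussian if $\mathbb{E}[e^{tz}]\le e^{t^2\sigma^2/2}$ for all $t$. For $\widehat U,U^*\in\mathbb{R}^{d\times r}$, $R_{(\widehat U,U^* )}=\arg\min_{R^TR=RR^T=I}\|\widehat U-U^*R\|_F$ and $\ell(\widehat U,U^* )=\|\widehat U-U^*R_{(\widehat U,U^* )}\|_{2,1}$. *)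

theory Defs
  imports "HOL-Analysis.Analysis" "HOL-Probability.Probability"
begin

definition norm21 :: "real^'c^'r \<Rightarrow> real" where
  "norm21 T = (\<Sum>j\<in>UNIV. norm (T $ j))"

text \<open>Frobenius norm of a real^'c^'r matrix is its (Euclidean) norm; the linear
  operator given by the matrices A i (i < n) is Z \<mapsto> (\<langle>A i, Z\<rangle>)_{i<n}.\<close>
definition opnormsq :: "(nat \<Rightarrow> real^'d^'d) \<Rightarrow> nat \<Rightarrow> real^'d^'d \<Rightarrow> real" where
  "opnormsq A n Z = (\<Sum>i<n. (A i \<bullet> Z)^2)"

definition RWC :: "nat \<Rightarrow> real \<Rightarrow> real \<Rightarrow> (nat \<Rightarrow> real^'d^'d) \<Rightarrow> nat \<Rightarrow> bool" where
  "RWC k \<alpha> \<beta> A n \<longleftrightarrow> 3 * \<alpha> > 2 * \<beta> \<and>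
     (\<forall>Z::real^'d^'d. rank Z \<le> k \<longrightarrow>
        \<alpha> * (norm Z)^2 \<le> opnormsq A n Z / real n \<and> opnormsq A n Z / real n \<le> \<beta> * (norm Z)^2)"

definition subgaussian :: "'a measure \<Rightarrow> ('a \<Rightarrow> real) \<Rightarrow> real \<Rightarrow> bool" where
  "subgaussian M z \<sigma> \<longleftrightarrow> (\<forall>t::real. integrable M (\<lambda>x. exp (t * z x)) \<and>
      (\<integral>x. exp (t * z x) \<partial>M) \<le> exp (t^2 * \<sigma>^2 / 2))"

definition procR :: "real^'r^'d \<Rightarrow> real^'r^'d \<Rightarrow> real^'r^'r" where
  "procR Uh Us = (SOME R. orthogonal_matrix R \<and>
      (\<forall>Q. orthogonal_matrix Q \<longrightarrow> norm (Uh - Us ** R) \<le> norm (Uh - Us ** Q)))"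

definition ell :: "real^'r^'d \<Rightarrow> real^'r^'d \<Rightarrow> real" where
  "ell Uh Us = norm21 (Uh - Us ** procR Uh Us)"

text \<open>sigma_r of a d x r matrix: the r-th largest (= smallest) singular value, i.e. the
  square root of the smallest eigenvalue of U^T U.\<close>
definition sigma_r :: "real^'r^'d \<Rightarrow> real" where
  "sigma_r U = sqrt (Min {c. \<exists>v. v \<noteq> 0 \<and> (transpose U ** U) *v v = c *\<^sub>R v})"

definition loss :: "(nat \<Rightarrow> real^'d^'d) \<Rightarrow> nat \<Rightarrow> (nat \<Rightarrow> real) \<Rightarrow> real^'r^'d \<Rightarrow> real" where
  "loss A N X U = (\<Sum>i<N. (X i - A i \<bullet> (U ** transpose U))^2) / real N"

end

theory Submission
  imports Defs
begin

lemma orth_iff_entries: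
  fixes R :: "real^'n^'n"
  shows "orthogonal_matrix R \<longleftrightarrow> (\<forall>i j. (\<Sum>k\<in>UNIV. R$k$i * R$k$j) = (if i = j then 1 else 0))"
  unfolding orthogonal_matrix
  by (auto simp: vec_eq_iff matrix_matrix_mult_def mat_def transpose_def)

lemma closed_orth: "closed {R::real^'n^'n. orthogonal_matrix R}"
proof -
  have "{R::real^'n^'n. orthogonal_matrix R} =
    (\<Inter>i. \<Inter>j. {R. (\<Sum>k\<in>UNIV. R$k$i * R$k$j) = (if i = j then 1 else 0)})"
    by (auto simp: orth_iff_entries)
  also have "closed \<dots>"
    by (intro closed_INT ballI closed_Collect_eq continuous_intros)
  finally show ?thesis .
qed

lemma orth_entry_bound:
  fixes R :: "real^'n^'n"
  assumes "orthogonal_matrix R"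
  shows "\<bar>R$k$i\<bar> \<le> 1"
proof -
  have "(\<Sum>k\<in>UNIV. R$k$i * R$k$i) = 1" using assms by (simp add: orth_iff_entries)
  moreover have "R$k$i * R$k$i \<le> (\<Sum>k\<in>UNIV. R$k$i * R$k$i)"
    by (rule member_le_sum) auto
  ultimately have "R$k$i^2 \<le> 1" by (simp add: power2_eq_square)
  then show ?thesis by (metis abs_le_square_iff abs_one power_one)
qed

lemma norm_orth:
  fixes R :: "real^'n^'n"
  assumes "orthogonal_matrix R"
  shows "norm R = sqrt (real CARD('n))"
proof -
  have "norm R ^ 2 = (\<Sum>k\<in>UNIV. \<Sum>i\<in>UNIV. R$k$i * R$k$i)"
    by (simp add: power2_norm_eq_inner inner_vec_def)
  also have "\<dots> = (\<Sum>i\<in>UNIV. \<Sum>k\<in>UNIV. R$k$i * R$k$i)" by (rule sum.swap)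
  also have "\<dots> = (\<Sum>i\<in>(UNIV::'n set). 1)" using assms by (simp add: orth_iff_entries)
  finally have "norm R ^ 2 = real CARD('n)" by simp
  then show ?thesis by (metis norm_ge_zero real_sqrt_unique)
qed

lemma bounded_orth: "bounded {R::real^'n^'n. orthogonal_matrix R}"
  unfolding bounded_iff using norm_orth by (metis mem_Collect_eq order_refl)

lemma procR_spec:
  fixes Uh Us :: "real^'r^'d"
  shows "orthogonal_matrix (procR Uh Us) \<and>
      (\<forall>Q. orthogonal_matrix Q \<longrightarrow> norm (Uh - Us ** procR Uh Us) \<le> norm (Uh - Us ** Q))"
proof -
  have "\<exists>R\<in>{R::real^'r^'r. orthogonal_matrix R}. \<forall>Q\<in>{R. orthogonal_matrix R}.
      norm (Uh - Us ** R) \<le> norm (Uh - Us ** Q)"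
  proof (rule continuous_attains_inf)
    show "compact {R::real^'r^'r. orthogonal_matrix R}"
      using closed_orth bounded_orth by (simp add: compact_eq_bounded_closed)
    show "{R::real^'r^'r. orthogonal_matrix R} \<noteq> {}" using orthogonal_matrix_id by blast
    show "continuous_on {R::real^'r^'r. orthogonal_matrix R} (\<lambda>R. norm (Uh - Us ** R))"
      unfolding matrix_matrix_mult_def by (intro continuous_intros)
  qed
  then have "\<exists>R. orthogonal_matrix R \<and>
      (\<forall>Q. orthogonal_matrix Q \<longrightarrow> norm (Uh - Us ** R) \<le> norm (Uh - Us ** Q))" by blast
  from someI_ex[OF this] show ?thesis unfolding procR_def .
qed

lemma inner_mat_columns:
  fixes C G :: "real^'n^'m"
  shows "C \<bullet> G = (\<Sum>j\<in>UNIV. column j C \<bullet> column j G)"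
proof -
  have "C \<bullet> G = (\<Sum>i\<in>UNIV. \<Sum>j\<in>UNIV. C$i$j * G$i$j)" by (simp add: inner_vec_def)
  also have "\<dots> = (\<Sum>j\<in>UNIV. \<Sum>i\<in>UNIV. C$i$j * G$i$j)" by (rule sum.swap)
  also have "\<dots> = (\<Sum>j\<in>UNIV. column j C \<bullet> column j G)" by (simp add: inner_vec_def column_def)
  finally show ?thesis .
qed

lemma tD_le:
  fixes D E :: real
  assumes "\<And>t. t * D \<le> t^2 * E"
  shows "D = 0"
proof (rule ccontr)
  assume "D \<noteq> 0"
  define t where "t = D / (2 * (\<bar>E\<bar> + 1))"
  have pos: "\<bar>E\<bar> + 1 > 0" by simp
  have tD: "t * D = D^2 / (2 * (\<bar>E\<bar> + 1))" by (simp add: t_def power2_eq_square)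
  have tDpos: "t * D > 0" unfolding tD using \<open>D \<noteq> 0\<close> pos by simp
  have "t^2 * E \<le> t^2 * \<bar>E\<bar>" by (simp add: mult_left_mono)
  also have "t^2 * \<bar>E\<bar> = (t * D) * (\<bar>E\<bar> / (2 * (\<bar>E\<bar> + 1)))"
    by (simp add: t_def power2_eq_square)
  also have "\<dots> \<le> (t * D) * (1/2)"
  proof (rule mult_left_mono)
    show "\<bar>E\<bar> / (2 * (\<bar>E\<bar> + 1)) \<le> 1/2" using pos by (simp add: divide_le_eq)
  qed (use tDpos in simp)
  finally have "t^2 * E \<le> t * D * (1/2)" .
  then show False using assms[of t] tDpos by linarith
qed

definition hh :: "real^'n \<Rightarrow> real^'n^'n" where
  "hh v = (\<chi> i j. (axis j 1 - (2 * v$j) *\<^sub>R v) $ i)"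

lemma column_hh: "column j (hh v) = axis j 1 - (2 * v$j) *\<^sub>R v"
  by (simp add: hh_def column_def vec_eq_iff)

lemma orth_hh:
  fixes v :: "real^'n"
  assumes "norm v = 1"
  shows "orthogonal_matrix (hh v)"
proof -
  have vv: "v \<bullet> v = 1" using assms by (simp add: norm_eq_1)
  show ?thesis
    unfolding orthogonal_matrix_orthonormal_columns column_hh
  proof (intro conjI allI impI)
    fix i
    have "(axis i 1 - (2 * v$i) *\<^sub>R v) \<bullet> (axis i 1 - (2 * v$i) *\<^sub>R v) = 1"
      by (simp add: inner_diff_left inner_diff_right inner_axis_axis inner_axis' inner_axis vv
           algebra_simps power2_eq_square inner_commute)
    then show "norm (axis i 1 - (2 * v$i) *\<^sub>R v) = 1" by (simp add: norm_eq_1)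
  next
    fix i j :: 'n assume "i \<noteq> j"
    then show "orthogonal (axis i 1 - (2 * v$i) *\<^sub>R v) (axis j 1 - (2 * v$j) *\<^sub>R v)"
      unfolding orthogonal_def
    proof -
      have e: "axis i 1 \<bullet> axis j (1::real) = 0" using \<open>i \<noteq> j\<close> by (simp add: inner_axis_axis)
      have a1: "axis i 1 \<bullet> v = v$i" "v \<bullet> axis j 1 = v$j" by (simp_all add: inner_axis inner_axis')
      show "(axis i 1 - (2 * v$i) *\<^sub>R v) \<bullet> (axis j 1 - (2 * v$j) *\<^sub>R v) = 0"
        by (simp add: inner_diff_left inner_diff_right e a1 vv algebra_simps)
    qed
  qed
qed

lemma inner_hh:
  fixes C :: "real^'n^'n"
  assumes "norm v = 1"
  shows "C \<bullet> hh v = C \<bullet> mat 1 - 2 * (v \<bullet> (C *v v))"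
proof -
  have "C \<bullet> hh v = (\<Sum>j\<in>UNIV. column j C \<bullet> (axis j 1 - (2 * v$j) *\<^sub>R v))"
    by (simp add: inner_mat_columns column_hh)
  also have "\<dots> = (\<Sum>j\<in>UNIV. column j C \<bullet> axis j 1) - 2 * (\<Sum>j\<in>UNIV. v$j * (column j C \<bullet> v))"
    by (simp add: inner_diff_right sum_subtractf sum_distrib_left mult.assoc)
  also have "(\<Sum>j\<in>UNIV. column j C \<bullet> axis j 1) = C \<bullet> mat 1"
  proof -
    have "(\<Sum>j\<in>UNIV. column j C \<bullet> axis j 1) = (\<Sum>j\<in>UNIV. C$j$j)"
      by (simp add: inner_axis column_def)
    moreover have "C \<bullet> mat 1 = (\<Sum>j\<in>UNIV. C$j$j)"
      unfolding inner_vec_def by (simp add: mat_def if_distrib cong: if_cong)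
    ultimately show ?thesis by simp
  qed
  also have "(\<Sum>j\<in>UNIV. v$j * (column j C \<bullet> v)) = v \<bullet> (C *v v)"
  proof -
    have "(\<Sum>j\<in>UNIV. v$j * (column j C \<bullet> v)) = (\<Sum>j\<in>UNIV. \<Sum>i\<in>UNIV. v$j * (C$i$j * v$i))"
      by (simp add: inner_vec_def column_def sum_distrib_left)
    also have "\<dots> = (\<Sum>i\<in>UNIV. \<Sum>j\<in>UNIV. v$j * (C$i$j * v$i))" by (rule sum.swap)
    also have "\<dots> = v \<bullet> (C *v v)"
      by (simp add: inner_vec_def matrix_vector_mult_def sum_distrib_left mult_ac)
    finally show ?thesis .
  qed
  finally show ?thesis .
qed

lemma psd_from_opt:
  fixes C :: "real^'n^'n"
  assumes opt: "\<And>G. orthogonal_matrix G \<Longrightarrow> C \<bullet> G \<le> C \<bullet> mat 1"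
  shows "0 \<le> v \<bullet> (C *v v)"
proof (cases "v = 0")
  case True then show ?thesis by simp
next
  case False
  define u where "u = v /\<^sub>R norm v"
  have u1: "norm u = 1" using False by (simp add: u_def)
  have "0 \<le> u \<bullet> (C *v u)" using opt[OF orth_hh[OF u1]] inner_hh[OF u1, of C] by simp
  moreover have "v \<bullet> (C *v v) = (norm v)^2 * (u \<bullet> (C *v u))"
    using False by (simp add: u_def matrix_vector_mult_scaleR power2_eq_square field_simps)
  ultimately show ?thesis by simp
qed

definition rcol :: "'n \<Rightarrow> 'n \<Rightarrow> real \<Rightarrow> real \<Rightarrow> 'n \<Rightarrow> real^'n::finite" where
  "rcol a b c s j = (if j = a then c *\<^sub>R axis a 1 + s *\<^sub>R axis b 1
     else if j = b then (-s) *\<^sub>R axis a 1 + c *\<^sub>R axis b 1 else axis j 1)"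

definition rot :: "'n \<Rightarrow> 'n \<Rightarrow> real \<Rightarrow> real \<Rightarrow> real^'n::finite^'n" where
  "rot a b c s = (\<chi> i j. rcol a b c s j $ i)"

lemma column_rot: "column j (rot a b c s) = rcol a b c s j"
  by (simp add: rot_def column_def vec_eq_iff)

lemma orth_rot:
  fixes a b :: "'n::finite"
  assumes ab: "a \<noteq> b" and cs: "c^2 + s^2 = 1"
  shows "orthogonal_matrix (rot a b c s)"
  unfolding orthogonal_matrix_orthonormal_columns column_rot
proof (intro conjI allI impI)
  have ax: "\<And>i j. axis i 1 \<bullet> axis j (1::real) = (if i = j then 1 else 0)"
    by (simp add: inner_axis_axis)
  fix i
  have "rcol a b c s i \<bullet> rcol a b c s i = 1"
    using ab cs by (auto simp: rcol_def inner_add_left inner_add_right ax power2_eq_square algebra_simps)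
  then show "norm (rcol a b c s i) = 1" by (simp add: norm_eq_1)
next
  have ax: "\<And>i j. axis i 1 \<bullet> axis j (1::real) = (if i = j then 1 else 0)"
    by (simp add: inner_axis_axis)
  fix i j :: 'n assume "i \<noteq> j"
  then show "orthogonal (rcol a b c s i) (rcol a b c s j)"
    using ab unfolding orthogonal_def
    by (auto simp: rcol_def inner_add_left inner_add_right ax algebra_simps)
qed

lemma inner_rot:
  fixes C :: "real^'n::finite^'n"
  assumes ab: "a \<noteq> b"
  shows "C \<bullet> rot a b c s = C \<bullet> mat 1 + (c - 1) * (C$a$a + C$b$b) + s * (C$b$a - C$a$b)"
proof -
  define w where "w j = rcol a b c s j - axis j 1" for j
  have w0: "w j = 0" if "j \<notin> {a, b}" for j using that by (simp add: w_def rcol_def)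
  have "C \<bullet> rot a b c s = (\<Sum>j\<in>UNIV. column j C \<bullet> (axis j 1 + w j))"
    by (simp add: inner_mat_columns column_rot w_def)
  also have "\<dots> = (\<Sum>j\<in>UNIV. column j C \<bullet> axis j 1) + (\<Sum>j\<in>UNIV. column j C \<bullet> w j)"
    by (simp add: inner_add_right sum.distrib)
  also have "(\<Sum>j\<in>UNIV. column j C \<bullet> axis j 1) = C \<bullet> mat 1"
  proof -
    have "(\<Sum>j\<in>UNIV. column j C \<bullet> axis j 1) = (\<Sum>j\<in>UNIV. C$j$j)"
      by (simp add: inner_axis column_def)
    moreover have "C \<bullet> mat 1 = (\<Sum>j\<in>UNIV. C$j$j)"
      unfolding inner_vec_def by (simp add: mat_def if_distrib cong: if_cong)
    ultimately show ?thesis by simp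
  qed
  also have "(\<Sum>j\<in>UNIV. column j C \<bullet> w j) = (\<Sum>j\<in>{a,b}. column j C \<bullet> w j)"
    by (rule sum.mono_neutral_right) (auto simp: w0)
  also have "\<dots> = column a C \<bullet> w a + column b C \<bullet> w b" using ab by simp
  also have "column a C \<bullet> w a + column b C \<bullet> w b = (c - 1) * (C$a$a + C$b$b) + s * (C$b$a - C$a$b)"
    using ab by (simp add: w_def rcol_def inner_add_right inner_diff_right inner_axis column_def algebra_simps)
  finally show ?thesis by (simp add: add.assoc)
qed

lemma sym_from_opt:
  fixes C :: "real^'n::finite^'n"
  assumes opt: "\<And>G. orthogonal_matrix G \<Longrightarrow> C \<bullet> G \<le> C \<bullet> mat 1"
  shows "C$a$b = C$b$a"
proof (cases "a = b")
  case True then show ?thesis by simp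
next
  case ab: False
  have "t * (C$b$a - C$a$b) \<le> t^2 * (C$a$a + C$b$b)" for t :: real
  proof -
    define c where "c = (1 - t^2) / (1 + t^2)"
    define s where "s = 2 * t / (1 + t^2)"
    have p: "1 + t^2 > 0" by (simp add: add_pos_nonneg)
    have "c^2 + s^2 = 1"
      using p by (simp add: c_def s_def power_divide divide_simps) (simp add: power2_eq_square algebra_simps)
    from opt[OF orth_rot[OF ab this]] inner_rot[OF ab, of C c s]
    have "(c - 1) * (C$a$a + C$b$b) + s * (C$b$a - C$a$b) \<le> 0" by simp
    then have "(1 + t^2) * ((c - 1) * (C$a$a + C$b$b) + s * (C$b$a - C$a$b)) \<le> 0"
      using p by (simp add: mult_nonneg_nonpos)
    moreover have "(1 + t^2) * ((c - 1) * (C$a$a + C$b$b) + s * (C$b$a - C$a$b))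
        = 2 * (t * (C$b$a - C$a$b) - t^2 * (C$a$a + C$b$b))"
    proof -
      have e1: "(1 + t^2) * (c - 1) = -2 * t^2" using p by (simp add: c_def field_simps)
      have e2: "(1 + t^2) * s = 2 * t" using p by (simp add: s_def)
      have "(1 + t^2) * ((c - 1) * (C$a$a + C$b$b) + s * (C$b$a - C$a$b))
         = ((1 + t^2) * (c - 1)) * (C$a$a + C$b$b) + ((1 + t^2) * s) * (C$b$a - C$a$b)"
        by (simp add: algebra_simps)
      then show ?thesis unfolding e1 e2 by (simp add: algebra_simps)
    qed
    ultimately show ?thesis by simp
  qed
  then have "C$b$a - C$a$b = 0" by (rule tD_le)
  then show ?thesis by simp
qed

lemma inner_trace:
  fixes A B :: "real^'c^'r"
  shows "A \<bullet> B = trace (transpose A ** B)"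
proof -
  have "trace (transpose A ** B) = (\<Sum>i\<in>UNIV. \<Sum>k\<in>UNIV. A$k$i * B$k$i)"
    by (simp add: trace_def matrix_matrix_mult_def transpose_def)
  also have "\<dots> = (\<Sum>k\<in>UNIV. \<Sum>i\<in>UNIV. A$k$i * B$k$i)" by (rule sum.swap)
  also have "\<dots> = A \<bullet> B" by (simp add: inner_vec_def)
  finally show ?thesis by simp
qed

lemma trace_transpose: "trace (transpose (A::real^'n^'n)) = trace A"
  by (simp add: trace_def transpose_def)

lemma trace_quad:
  fixes H :: "real^'r^'d" and C :: "real^'r^'r"
  shows "trace (H ** C ** transpose H) = (\<Sum>k\<in>UNIV. (H$k) \<bullet> (C *v (H$k)))"
proof -
  have "trace (H ** C ** transpose H) = (\<Sum>k\<in>UNIV. \<Sum>j\<in>UNIV. \<Sum>a\<in>UNIV. H$k$a * C$a$j * H$k$j)"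
    by (simp add: trace_def matrix_matrix_mult_def transpose_def sum_distrib_right)
  also have "\<dots> = (\<Sum>k\<in>UNIV. \<Sum>a\<in>UNIV. \<Sum>j\<in>UNIV. H$k$a * C$a$j * H$k$j)"
    by (rule sum.cong[OF refl], rule sum.swap)
  also have "\<dots> = (\<Sum>k\<in>UNIV. (H$k) \<bullet> (C *v (H$k)))"
    by (simp add: inner_vec_def matrix_vector_mult_def sum_distrib_left mult_ac)
  finally show ?thesis .
qed

lemma perturb_core:
  fixes X H :: "real^'r^'d"
  defines "M \<equiv> transpose X ** H" and "N \<equiv> transpose H ** H"
  assumes symM: "transpose M = M"
    and psd: "\<And>v. 0 \<le> v \<bullet> ((transpose X ** (X + H)) *v v)"
  shows "(4/5) * (norm (X ** transpose H))^2 \<le> (norm (X ** transpose H + H ** transpose X + H ** transpose H))^2"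
proof -
  let ?P = "X ** transpose H" and ?Q = "H ** transpose X" and ?R = "H ** transpose H"
  define Cc where "Cc = ?P \<bullet> ?P"
  have symN: "transpose N = N" by (simp add: N_def matrix_transpose_mul)
  have QQ: "?Q \<bullet> ?Q = Cc"
  proof -
    have "?Q \<bullet> ?Q = trace (X ** (transpose H ** H) ** transpose X)"
      by (simp add: inner_trace matrix_transpose_mul matrix_mul_assoc)
    also have "\<dots> = trace (transpose X ** (X ** (transpose H ** H)))"
      by (rule trace_mul_sym)
    also have "\<dots> = trace ((transpose H ** H) ** (transpose X ** X))"
      by (metis matrix_mul_assoc trace_mul_sym)
    also have "\<dots> = trace (H ** ((transpose X ** X) ** transpose H))"
      by (metis matrix_mul_assoc trace_mul_sym)
    also have "\<dots> = Cc"
      by (simp add: Cc_def inner_trace matrix_transpose_mul matrix_mul_assoc)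
    finally show ?thesis .
  qed
  have PQ: "?P \<bullet> ?Q = M \<bullet> M"
  proof -
    have "?P \<bullet> ?Q = trace (H ** ((transpose X ** H) ** transpose X))"
      by (simp add: inner_trace matrix_transpose_mul matrix_mul_assoc)
    also have "\<dots> = trace (((transpose X ** H) ** transpose X) ** H)"
      by (rule trace_mul_sym)
    also have "\<dots> = trace (transpose M ** M)"
      by (simp add: symM) (simp add: M_def matrix_mul_assoc)
    also have "\<dots> = M \<bullet> M" by (simp add: inner_trace)
    finally show ?thesis .
  qed
  have PR: "?P \<bullet> ?R = N \<bullet> M"
  proof -
    have "?P \<bullet> ?R = trace (H ** ((transpose X ** H) ** transpose H))"
      by (simp add: inner_trace matrix_transpose_mul matrix_mul_assoc)
    also have "\<dots> = trace (((transpose X ** H) ** transpose H) ** H)"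
      by (rule trace_mul_sym)
    also have "\<dots> = trace ((transpose X ** H) ** (transpose H ** H))"
      by (simp add: matrix_mul_assoc)
    also have "\<dots> = trace ((transpose H ** H) ** (transpose X ** H))"
      by (rule trace_mul_sym)
    also have "\<dots> = trace (transpose N ** M)" by (simp add: symN) (simp add: N_def M_def)
    also have "\<dots> = N \<bullet> M" by (simp add: inner_trace)
    finally show ?thesis .
  qed
  have QR: "?Q \<bullet> ?R = N \<bullet> M"
  proof -
    have "?Q \<bullet> ?R = trace (X ** (transpose H ** H) ** transpose H)"
      by (simp add: inner_trace matrix_transpose_mul matrix_mul_assoc)
    also have "\<dots> = trace (transpose H ** (X ** (transpose H ** H)))"
      by (metis matrix_mul_assoc trace_mul_sym)
    also have "\<dots> = trace (transpose (transpose X ** H) ** (transpose H ** H))"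
      by (simp add: matrix_transpose_mul matrix_mul_assoc)
    also have "\<dots> = trace ((transpose H ** H) ** M)"
      by (simp add: trace_mul_sym[of "transpose (transpose X ** H)"]) (simp add: M_def[symmetric] symM)
    also have "\<dots> = trace (transpose N ** M)" by (simp add: symN) (simp add: N_def)
    also have "\<dots> = N \<bullet> M" by (simp add: inner_trace)
    finally show ?thesis .
  qed
  have RR: "?R \<bullet> ?R = N \<bullet> N"
  proof -
    have "?R \<bullet> ?R = trace (H ** ((transpose H ** H) ** transpose H))"
      by (simp add: inner_trace matrix_transpose_mul matrix_mul_assoc)
    also have "\<dots> = trace (((transpose H ** H) ** transpose H) ** H)"
      by (rule trace_mul_sym)
    also have "\<dots> = trace (transpose N ** N)" by (simp add: symN) (simp add: N_def matrix_mul_assoc)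
    also have "\<dots> = N \<bullet> N" by (simp add: inner_trace)
    finally show ?thesis .
  qed
  have expand: "(norm (?P + ?Q + ?R))^2 = N \<bullet> N + 2 * Cc + 2 * (M \<bullet> M) + 4 * (N \<bullet> M)"
    unfolding power2_norm_eq_inner
    by (simp add: inner_add_left inner_add_right inner_commute[of ?Q ?P] inner_commute[of ?R ?P]
         inner_commute[of ?R ?Q] QQ PQ PR QR RR Cc_def[symmetric])
  have Tlow: "N \<bullet> M \<ge> - Cc"
  proof -
    let ?C = "transpose X ** (X + H)"
    have "0 \<le> (\<Sum>k\<in>UNIV. (H$k) \<bullet> (?C *v (H$k)))" by (intro sum_nonneg psd)
    also have "(\<Sum>k\<in>UNIV. (H$k) \<bullet> (?C *v (H$k))) = trace (H ** ?C ** transpose H)"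
      by (rule trace_quad[symmetric])
    also have "\<dots> = trace (transpose H ** (H ** ?C))"
      by (metis matrix_mul_assoc trace_mul_sym)
    also have "\<dots> = trace (N ** (transpose X ** X)) + trace (N ** M)"
      by (simp add: matrix_add_ldistrib matrix_mul_assoc trace_add N_def M_def)
    also have "trace (N ** (transpose X ** X)) = Cc"
    proof -
      have "Cc = trace (H ** ((transpose X ** X) ** transpose H))"
        by (simp add: Cc_def inner_trace matrix_transpose_mul matrix_mul_assoc)
      also have "\<dots> = trace (((transpose X ** X) ** transpose H) ** H)" by (rule trace_mul_sym)
      also have "\<dots> = trace ((transpose X ** X) ** N)" by (simp add: N_def matrix_mul_assoc)
      also have "\<dots> = trace (N ** (transpose X ** X))" by (rule trace_mul_sym)
      finally show ?thesis by simp
    qed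
    also have "trace (N ** M) = N \<bullet> M" by (simp add: inner_trace symN)
    finally show ?thesis by simp
  qed
  have CS: "(N \<bullet> M)^2 \<le> (N \<bullet> N) * (M \<bullet> M)"
  proof -
    have "\<bar>N \<bullet> M\<bar> \<le> norm N * norm M" by (rule Cauchy_Schwarz_ineq2)
    then have "\<bar>N \<bullet> M\<bar>^2 \<le> (norm N * norm M)^2" by (intro power_mono) auto
    then show ?thesis by (simp add: power_mult_distrib power2_norm_eq_inner)
  qed
  have key: "0 \<le> N \<bullet> N + 2 * (M \<bullet> M) + (14/5) * (N \<bullet> M)"
  proof (rule ccontr)
    define a where "a = N \<bullet> N" define b where "b = M \<bullet> M" define t where "t = N \<bullet> M"
    have a0: "a \<ge> 0" "b \<ge> 0" by (simp_all add: a_def b_def)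
    assume "\<not> ?thesis"
    then have lt: "a + 2 * b < - (14/5) * t" by (simp add: a_def b_def t_def)
    then have "(a + 2 * b)^2 < (-(14/5) * t)^2" using a0 by (intro power_strict_mono) auto
    moreover have "(a + 2 * b)^2 \<ge> 8 * (a * b)"
    proof -
      have "(a + 2 * b)^2 - 8 * (a * b) = (a - 2 * b)^2" by (simp add: power2_eq_square algebra_simps)
      then show ?thesis by (smt (verit) zero_le_power2)
    qed
    moreover have "t^2 \<le> a * b" using CS by (simp add: a_def b_def t_def)
    moreover have "(-(14/5) * t)^2 = (196/25) * t^2" by (simp add: power2_eq_square)
    moreover have "(a + 2 * b)^2 \<ge> 0" by simp
    ultimately show False by linarith
  qed
  show ?thesis
    using expand Tlow key by (simp add: Cc_def power2_norm_eq_inner)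
qed

lemma quad_mat:
  fixes A :: "real^'r^'d"
  shows "x \<bullet> ((transpose A ** A) *v y) = (A *v x) \<bullet> (A *v y)"
proof -
  have "(transpose A ** A) *v y = transpose A *v (A *v y)" by (simp add: matrix_vector_mul_assoc)
  also have "\<dots> = (A *v y) v* A" by simp
  finally show ?thesis by (metis dot_lmul_matrix inner_commute)
qed

lemma sigma_r_props:
  fixes U :: "real^'r^'d"
  assumes rk: "rank U = CARD('r)"
  shows "sigma_r U > 0" "\<And>v. (sigma_r U)^2 * (norm v)^2 \<le> (norm (U *v v))^2"
proof -
  let ?S = "transpose U ** U"
  define f where "f v = (norm (U *v v))^2" for v :: "real^'r"
  have inj: "inj ((*v) U)" using rk full_rank_injective by blast
  have "\<exists>v0\<in>{v::real^'r. norm v = 1}. \<forall>y\<in>{v. norm v = 1}. f v0 \<le> f y"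
  proof (rule continuous_attains_inf)
    show "compact {v::real^'r. norm v = 1}"
      using compact_sphere[of 0 1] by (simp add: sphere_def dist_norm)
    obtain k :: 'r where True by simp
    have "norm (axis k (1::real)) = 1" by simp
    then show "{v::real^'r. norm v = 1} \<noteq> {}" by blast
    show "continuous_on {v::real^'r. norm v = 1} f"
      unfolding f_def matrix_vector_mult_def by (intro continuous_intros)
  qed
  then obtain v0 where v0: "norm v0 = 1" and vmin: "\<And>y. norm y = 1 \<Longrightarrow> f v0 \<le> f y" by blast
  define \<mu> where "\<mu> = f v0"
  have fscale: "\<mu> * (norm u)^2 \<le> f u" for u
  proof (cases "u = 0")
    case True then show ?thesis by (simp add: f_def)
  next
    case False
    have "\<mu> \<le> f (u /\<^sub>R norm u)" unfolding \<mu>_def using False by (intro vmin) simp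
    also have "f (u /\<^sub>R norm u) = f u / (norm u)^2"
      using False by (simp add: f_def matrix_vector_mult_scaleR power_mult_distrib field_simps)
    finally show ?thesis using False by (simp add: field_simps)
  qed
  have v0ne: "v0 \<noteq> 0" using v0 by auto
  have mupos: "\<mu> > 0"
  proof -
    have "U *v v0 \<noteq> 0" using inj v0ne by (metis injD matrix_vector_mult_0_right)
    then show ?thesis by (simp add: \<mu>_def f_def)
  qed
  have eig: "?S *v v0 = \<mu> *\<^sub>R v0"
  proof -
    define z where "z = ?S *v v0 - \<mu> *\<^sub>R v0"
    have "w \<bullet> z = 0" for w
    proof -
      have "t * (-2 * (w \<bullet> z)) \<le> t^2 * (f w - \<mu> * (norm w)^2)" for t
      proof -
        have h1: "\<mu> * (norm (v0 + t *\<^sub>R w))^2 \<le> f (v0 + t *\<^sub>R w)" by (rule fscale)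
        have h2: "(norm (v0 + t *\<^sub>R w))^2 = 1 + 2 * t * (v0 \<bullet> w) + t^2 * (norm w)^2"
          using v0 unfolding power2_norm_eq_inner
          by (simp add: inner_add_left inner_add_right norm_eq_1
              inner_commute[of w v0] power2_eq_square algebra_simps)
        have h3: "f (v0 + t *\<^sub>R w) = \<mu> + 2 * t * (w \<bullet> (?S *v v0)) + t^2 * f w"
          unfolding f_def \<mu>_def power2_norm_eq_inner
          by (simp add: matrix_vector_right_distrib
              matrix_vector_mult_scaleR inner_add_left inner_add_right quad_mat
              inner_commute[of "U *v w" "U *v v0"] power2_eq_square algebra_simps)
        have h4: "w \<bullet> (?S *v v0) = w \<bullet> z + \<mu> * (v0 \<bullet> w)"
          by (simp add: z_def inner_diff_right inner_commute)
        have "\<mu> * (1 + 2 * t * (v0 \<bullet> w) + t^2 * (norm w)^2) \<le> \<mu> + 2 * t * (w \<bullet> z + \<mu> * (v0 \<bullet> w)) + t^2 * f w"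
          using h1 unfolding h2 h3 h4 .
        then show ?thesis by (simp add: algebra_simps)
      qed
      then have "-2 * (w \<bullet> z) = 0" by (rule tD_le)
      then show ?thesis by simp
    qed
    then have "z \<bullet> z = 0" by blast
    then show ?thesis by (simp add: z_def)
  qed
  define E where "E = {c. \<exists>v. v \<noteq> 0 \<and> ?S *v v = c *\<^sub>R v}"
  have mu_in: "\<mu> \<in> E" unfolding E_def using eig v0ne by blast
  have ge: "\<mu> \<le> c" if "c \<in> E" for c
  proof -
    obtain v where v: "v \<noteq> 0" "?S *v v = c *\<^sub>R v" using \<open>c \<in> E\<close> unfolding E_def by blast
    have "c * (norm v)^2 = v \<bullet> (?S *v v)" by (simp add: v power2_norm_eq_inner)
    also have "\<dots> = f v" by (simp add: quad_mat f_def power2_norm_eq_inner)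
    finally have "\<mu> * (norm v)^2 \<le> c * (norm v)^2" using fscale[of v] by simp
    then show ?thesis using v by simp
  qed
  have finE: "finite E"
  proof -
    define ev where "ev c = (SOME v. v \<noteq> 0 \<and> ?S *v v = c *\<^sub>R v)" for c
    have evp: "ev c \<noteq> 0 \<and> ?S *v ev c = c *\<^sub>R ev c" if "c \<in> E" for c
      using that unfolding E_def ev_def by (metis (mono_tags, lifting) mem_Collect_eq someI_ex)
    have orth: "ev c \<bullet> ev d = 0" if "c \<in> E" "d \<in> E" "c \<noteq> d" for c d
    proof -
      have "c * (ev c \<bullet> ev d) = (?S *v ev c) \<bullet> ev d" using evp[OF that(1)] by simp
      also have "\<dots> = ev c \<bullet> (?S *v ev d)"
        by (simp add: quad_mat inner_commute[of "?S *v ev c"] inner_commute[of "U *v ev d"])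
      also have "\<dots> = d * (ev c \<bullet> ev d)" using evp[OF that(2)] by simp
      finally show ?thesis using that(3) by simp
    qed
    have injev: "inj_on ev E"
    proof (rule inj_onI)
      fix c d assume cd: "c \<in> E" "d \<in> E" "ev c = ev d"
      show "c = d"
      proof (rule ccontr)
        assume "c \<noteq> d"
        then have "ev c \<bullet> ev c = 0" using orth[OF cd(1,2)] cd(3) by simp
        then show False using evp[OF cd(1)] by simp
      qed
    qed
    have "pairwise orthogonal (ev ` E)"
      unfolding pairwise_def orthogonal_def using orth by (metis imageE)
    moreover have "0 \<notin> ev ` E" using evp by auto
    ultimately have "independent (ev ` E)" by (rule pairwise_orthogonal_independent)
    then have "finite (ev ` E)" by (rule finiteI_independent)
    then show ?thesis using injev finite_imageD by blast
  qed
  have minE: "Min E = \<mu>" by (rule Min_eqI[OF finE ge mu_in])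
  have sig: "sigma_r U = sqrt \<mu>" unfolding sigma_r_def E_def[symmetric] minE ..
  show "sigma_r U > 0" using sig mupos by simp
  fix v
  show "(sigma_r U)^2 * (norm v)^2 \<le> (norm (U *v v))^2"
    using sig mupos fscale[of v] by (simp add: f_def)
qed

lemma norm_sq_columns:
  fixes A :: "real^'c^'r"
  shows "(norm A)^2 = (\<Sum>k\<in>UNIV. (norm (column k A))^2)"
proof -
  have "(norm A)^2 = (\<Sum>i\<in>UNIV. \<Sum>k\<in>UNIV. A$i$k * A$i$k)"
    by (simp add: power2_norm_eq_inner inner_vec_def)
  also have "\<dots> = (\<Sum>k\<in>UNIV. \<Sum>i\<in>UNIV. A$i$k * A$i$k)" by (rule sum.swap)
  also have "\<dots> = (\<Sum>k\<in>UNIV. (norm (column k A))^2)"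
    by (simp add: power2_norm_eq_inner inner_vec_def column_def)
  finally show ?thesis .
qed

lemma norm_sq_rows:
  fixes A :: "real^'c^'r"
  shows "(norm A)^2 = (\<Sum>k\<in>UNIV. (norm (A$k))^2)"
  by (simp add: power2_norm_eq_inner inner_vec_def)

lemma orth_norm_vec:
  fixes G :: "real^'n^'n"
  assumes "orthogonal_matrix G"
  shows "norm (G *v x) = norm x"
proof -
  have "(G *v x) \<bullet> (G *v x) = x \<bullet> ((transpose G ** G) *v x)"
    by (simp add: quad_mat)
  also have "\<dots> = x \<bullet> x" using assms by (simp add: orthogonal_matrix)
  finally show ?thesis by (simp add: norm_eq_sqrt_inner)
qed

lemma mm_diff_l: "(A::real^'n^'m) ** (B - C) = A ** B - A ** C"
  by (simp add: vec_eq_iff matrix_matrix_mult_def sum_subtractf algebra_simps)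
lemma mm_add_r: "((A::real^'n^'m) + B) ** C = A ** C + B ** C"
  by (simp add: vec_eq_iff matrix_matrix_mult_def sum.distrib algebra_simps)
lemma mm_add_l: "(A::real^'n^'m) ** (B + C) = A ** B + A ** C"
  by (simp add: vec_eq_iff matrix_matrix_mult_def sum.distrib algebra_simps)
lemma tr_add: "transpose ((A::real^'n^'m) + B) = transpose A + transpose B"
  by (simp add: vec_eq_iff transpose_def)
lemma tr_diff: "transpose ((A::real^'n^'m) - B) = transpose A - transpose B"
  by (simp add: vec_eq_iff transpose_def)

lemma orth_norm_vm:
  fixes G :: "real^'n^'n"
  assumes "orthogonal_matrix G"
  shows "norm (x v* G) = norm x"
proof -
  have "x v* G = transpose G *v x" by simp
  moreover have "orthogonal_matrix (transpose G)" using assms by simp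
  ultimately show ?thesis using orth_norm_vec by metis
qed

lemma orth_norm_mat:
  fixes X :: "real^'r^'d" and G :: "real^'r^'r"
  assumes "orthogonal_matrix G"
  shows "norm (X ** G) = norm X"
proof -
  have row: "(X ** G) $ k = (X $ k) v* G" for k
    by (simp add: vec_eq_iff matrix_matrix_mult_def vector_matrix_mult_def mult.commute)
  have "(norm (X ** G))^2 = (norm X)^2"
    unfolding norm_sq_rows row using assms by (simp add: orth_norm_vm)
  then show ?thesis by (simp add: power2_eq_iff_nonneg)
qed

lemma det_main:
  fixes Uh Up :: "real^'r^'d"
  assumes rk: "rank Up = CARD('r)"
  shows "(4/5) * (sigma_r Up)^2 * (norm (Uh - Up ** procR Uh Up))^2
          \<le> (norm (Uh ** transpose Uh - Up ** transpose Up))^2"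
proof -
  define R where "R = procR Uh Up"
  have Rorth: "orthogonal_matrix R" and Rmin: "\<And>Q. orthogonal_matrix Q \<Longrightarrow> norm (Uh - Up ** R) \<le> norm (Uh - Up ** Q)"
    using procR_spec[of Uh Up] unfolding R_def by auto
  define X where "X = Up ** R"
  define H where "H = Uh - X"
  define C where "C = transpose X ** Uh"
  have opt: "C \<bullet> G \<le> C \<bullet> mat 1" if G: "orthogonal_matrix G" for G
  proof -
    have "norm (Uh - X) \<le> norm (Uh - X ** G)"
      using Rmin[OF orthogonal_matrix_mul[OF Rorth G]] by (simp add: X_def matrix_mul_assoc)
    then have "(norm (Uh - X))^2 \<le> (norm (Uh - X ** G))^2" by (intro power_mono) auto
    moreover have "(norm (Uh - Y))^2 = (norm Uh)^2 - 2 * (Uh \<bullet> Y) + (norm Y)^2" for Y :: "real^'r^'d"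
      by (simp add: power2_norm_eq_inner inner_diff_left inner_diff_right inner_commute)
    moreover have "norm (X ** G) = norm X" by (rule orth_norm_mat[OF G])
    ultimately have "Uh \<bullet> (X ** G) \<le> Uh \<bullet> X" by simp
    moreover have "Uh \<bullet> (X ** G) = C \<bullet> G"
      by (simp add: inner_trace C_def matrix_transpose_mul matrix_mul_assoc)
    moreover have "Uh \<bullet> X = C \<bullet> mat 1"
      by (simp add: inner_trace C_def matrix_transpose_mul)
    ultimately show ?thesis by simp
  qed
  have symC: "C$a$b = C$b$a" for a b by (rule sym_from_opt[OF opt])
  have psd: "0 \<le> v \<bullet> ((transpose X ** (X + H)) *v v)" for v
    using psd_from_opt[OF opt] by (simp add: C_def H_def)
  have symXX: "transpose (transpose X ** X) = transpose X ** X" by (simp add: matrix_transpose_mul)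
  have symM: "transpose (transpose X ** H) = transpose X ** H"
  proof -
    have "transpose X ** H = C - transpose X ** X"
      by (simp add: C_def H_def mm_diff_l)
    moreover have "transpose C = C" using symC by (simp add: vec_eq_iff transpose_def)
    ultimately show ?thesis using symXX by (simp add: tr_diff)
  qed
  have core: "(4/5) * (norm (X ** transpose H))^2
      \<le> (norm (X ** transpose H + H ** transpose X + H ** transpose H))^2"
    by (rule perturb_core[OF symM psd])
  have XX: "X ** transpose X = Up ** transpose Up"
  proof -
    have "R ** transpose R = mat 1" using Rorth by (simp add: orthogonal_matrix_def)
    then show ?thesis
      by (simp add: X_def matrix_transpose_mul matrix_mul_assoc flip: matrix_mul_assoc[of Up R])
  qed
  have Delta: "Uh ** transpose Uh - Up ** transpose Up = X ** transpose H + H ** transpose X + H ** transpose H"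
  proof -
    have "Uh = X + H" by (simp add: H_def)
    then have "Uh ** transpose Uh = (X + H) ** transpose (X + H)" by simp
    also have "\<dots> = X ** transpose X + X ** transpose H + H ** transpose X + H ** transpose H"
      by (simp add: tr_add mm_add_l mm_add_r algebra_simps)
    finally show ?thesis using XX by (simp add: algebra_simps)
  qed
  have low: "(sigma_r Up)^2 * (norm H)^2 \<le> (norm (X ** transpose H))^2"
  proof -
    have col: "column k (X ** transpose H) = X *v (H$k)" for k
      by (simp add: vec_eq_iff column_def matrix_matrix_mult_def matrix_vector_mult_def transpose_def)
    have "(sigma_r Up)^2 * (norm H)^2 = (\<Sum>k\<in>UNIV. (sigma_r Up)^2 * (norm (H$k))^2)"
      by (simp add: norm_sq_rows sum_distrib_left)
    also have "\<dots> \<le> (\<Sum>k\<in>UNIV. (norm (X *v (H$k)))^2)"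
    proof (rule sum_mono)
      fix k
      have "(sigma_r Up)^2 * (norm (R *v (H$k)))^2 \<le> (norm (Up *v (R *v (H$k))))^2"
        by (rule sigma_r_props(2)[OF rk])
      then show "(sigma_r Up)^2 * (norm (H$k))^2 \<le> (norm (X *v (H$k)))^2"
        by (simp add: orth_norm_vec[OF Rorth] X_def matrix_vector_mul_assoc)
    qed
    also have "\<dots> = (norm (X ** transpose H))^2"
      by (simp add: norm_sq_columns col)
    finally show ?thesis .
  qed
  have "(4/5) * (sigma_r Up)^2 * (norm H)^2 \<le> (4/5) * (norm (X ** transpose H))^2"
    using low by simp
  also have "\<dots> \<le> (norm (Uh ** transpose Uh - Up ** transpose Up))^2"
    using core Delta by simp
  finally show ?thesis by (simp add: H_def X_def R_def)
qed

lemma norm21_add: "norm21 (A + B) \<le> norm21 A + norm21 B"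
  unfolding norm21_def by (simp add: sum.distrib[symmetric] sum_mono norm_triangle_ineq)

lemma norm21_orth:
  fixes M :: "real^'r^'d" and G :: "real^'r^'r"
  assumes "orthogonal_matrix G"
  shows "norm21 (M ** G) = norm21 M"
proof -
  have row: "(M ** G) $ k = (M $ k) v* G" for k
    by (simp add: vec_eq_iff matrix_matrix_mult_def vector_matrix_mult_def mult.commute)
  show ?thesis unfolding norm21_def row using assms by (simp add: orth_norm_vm)
qed

lemma norm21_frob:
  fixes M :: "real^'c^'r"
  shows "norm21 M \<le> sqrt (real CARD('r)) * norm M"
proof -
  have "(\<Sum>k\<in>UNIV. 1 * norm (M$k))^2 \<le> (\<Sum>k\<in>(UNIV::'r set). 1^2) * (\<Sum>k\<in>UNIV. (norm (M$k))^2)"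
    by (rule Cauchy_Schwarz_ineq_sum)
  then have "(norm21 M)^2 \<le> real CARD('r) * (norm M)^2"
    by (simp add: norm21_def norm_sq_rows)
  then have "sqrt ((norm21 M)^2) \<le> sqrt (real CARD('r) * (norm M)^2)" by (rule real_sqrt_le_mono)
  moreover have "norm21 M \<ge> 0" unfolding norm21_def by (simp add: sum_nonneg)
  ultimately show ?thesis by (simp add: real_sqrt_mult)
qed

lemma ell_triangle:
  fixes Uh Up Ug :: "real^'r^'d"
  shows "ell Uh Ug \<le> norm21 (Ug - Up) + norm21 (Up ** (procR Uh Up - procR Uh Ug))
           + norm21 (Uh - Up ** procR Uh Up)"
proof -
  define R1 where "R1 = procR Uh Up"
  define R2 where "R2 = procR Uh Ug"
  have R2o: "orthogonal_matrix R2" using procR_spec[of Uh Ug] by (simp add: R2_def)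
  have eq: "Uh - Ug ** R2 = (Uh - Up ** R1) + Up ** (R1 - R2) + (Up - Ug) ** R2"
    by (simp add: mm_diff_l vec_eq_iff matrix_matrix_mult_def sum_subtractf algebra_simps)
  have "ell Uh Ug = norm21 ((Uh - Up ** R1) + Up ** (R1 - R2) + (Up - Ug) ** R2)"
    unfolding ell_def R2_def[symmetric] eq ..
  also have "\<dots> \<le> norm21 (Uh - Up ** R1) + norm21 (Up ** (R1 - R2)) + norm21 ((Up - Ug) ** R2)"
    by (meson add_mono norm21_add order_refl order_trans)
  also have "norm21 ((Up - Ug) ** R2) = norm21 (Ug - Up)"
    using norm21_orth[OF R2o, of "Up - Ug"] by (simp add: norm21_def norm_minus_commute)
  finally show ?thesis by (simp add: R1_def R2_def)
qed

locale normlike =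
  fixes N :: "'a::euclidean_space \<Rightarrow> real" and c1 c2 :: real
  assumes tri: "\<And>x y. N (x + y) \<le> N x + N y"
    and hom: "\<And>c x. N (c *\<^sub>R x) = \<bar>c\<bar> * N x"
    and lo: "\<And>x. c1 * norm x \<le> N x"
    and hi: "\<And>x. N x \<le> c2 * norm x"
    and c1: "c1 > 0"
begin

lemma sym: "N (x - y) = N (y - x)"
  using hom[of "-1" "x - y"] by simp

lemma nonneg: "N x \<ge> 0"
  using lo[of x] c1 by (smt (verit) mult_nonneg_nonneg norm_ge_zero)

lemma c2pos: "c2 > 0"
proof -
  obtain b :: 'a where "b \<in> Basis" using nonempty_Basis by blast
  then have "norm b = 1" by simp
  then show ?thesis using lo[of b] hi[of b] c1 by simp
qed

lemma lip: "\<bar>N x - N y\<bar> \<le> c2 * dist x y"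
proof -
  have "N x \<le> N y + N (x - y)" using tri[of y "x - y"] by simp
  moreover have "N y \<le> N x + N (y - x)" using tri[of x "y - x"] by simp
  moreover have "N (x - y) \<le> c2 * dist x y" using hi[of "x - y"] by (simp add: dist_norm)
  ultimately show ?thesis using sym[of x y] by linarith
qed

lemma cont: "continuous_on UNIV N"
proof (rule lipschitz_on_continuous_on)
  show "c2-lipschitz_on UNIV N"
    by (rule lipschitz_onI) (use lip c2pos in \<open>auto simp: dist_real_def\<close>)
qed

lemma open_lt: "open {z. N (z - p) < r}"
proof -
  have "continuous_on UNIV (\<lambda>z. N (z - p))"
    by (intro continuous_on_compose2[OF cont]) (auto intro!: continuous_intros)
  then show ?thesis by (simp add: open_Collect_less continuous_on_const)
qed

lemma bounded_lt: "bounded {z. N (z - p) < r}"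
proof -
  have "norm z \<le> norm p + r / c1" if "N (z - p) < r" for z
  proof -
    have "c1 * norm (z - p) \<le> N (z - p)" by (rule lo)
    then have "norm (z - p) \<le> r / c1" using that c1 by (simp add: field_simps)
    moreover have "norm z \<le> norm p + norm (z - p)" by (metis norm_triangle_sub add.commute)
    ultimately show ?thesis by linarith
  qed
  then show ?thesis unfolding bounded_iff by blast
qed

lemma lmeas_lt: "{z. N (z - p) < r} \<in> lmeasurable"
  by (rule lmeasurable_open[OF bounded_lt open_lt])

definition K0 where "K0 = {z. N z < 1}"

lemma K0_lmeas: "K0 \<in> lmeasurable"
  using lmeas_lt[of 0 1] by (simp add: K0_def)

lemma K0_pos: "measure lebesgue K0 > 0"
proof -
  have sub: "ball 0 (1/c2) \<subseteq> K0"
  proof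
    fix z :: 'a assume "z \<in> ball 0 (1/c2)"
    then have "norm z < 1/c2" by simp
    then have "c2 * norm z < 1" using c2pos by (simp add: field_simps)
    then show "z \<in> K0" using hi[of z] by (simp add: K0_def)
  qed
  have "measure lebesgue (ball (0::'a) (1/c2)) = measure lborel (ball (0::'a) (1/c2))"
    by (rule measure_completion) simp
  moreover have "measure lborel (ball (0::'a) (1/c2)) > 0" using c2pos by (intro content_ball_pos) simp
  moreover have "measure lebesgue (ball (0::'a) (1/c2)) \<le> measure lebesgue K0"
    by (intro measure_mono_fmeasurable sub K0_lmeas) auto
  ultimately show ?thesis by linarith
qed

lemma ball_img:
  assumes "r > 0"
  shows "{z. N (z - p) < r} = (\<lambda>x. r *\<^sub>R x + p) ` K0"
proof (intro set_eqI iffI)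
  fix z assume "z \<in> {z. N (z - p) < r}"
  then have lt: "N (z - p) < r" by simp
  have eq: "N ((1/r) *\<^sub>R (z - p)) = N (z - p) / r" using assms hom[of "1/r" "z - p"] by simp
  have "N ((1/r) *\<^sub>R (z - p)) < 1" unfolding eq using lt assms by (simp add: divide_less_eq)
  then have "(1/r) *\<^sub>R (z - p) \<in> K0" unfolding K0_def by simp
  moreover have "z = r *\<^sub>R ((1/r) *\<^sub>R (z - p)) + p" using assms by simp
  ultimately show "z \<in> (\<lambda>x. r *\<^sub>R x + p) ` K0" by (rule rev_image_eqI)
next
  fix z assume "z \<in> (\<lambda>x. r *\<^sub>R x + p) ` K0"
  then obtain x where "N x < 1" "z = r *\<^sub>R x + p" by (auto simp: K0_def)
  then show "z \<in> {z. N (z - p) < r}" using assms by (simp add: hom)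
qed

lemma measure_ball:
  assumes "r > 0"
  shows "measure lebesgue {z. N (z - p) < r} = r ^ DIM('a) * measure lebesgue K0"
  unfolding ball_img[OF assms] measure_lebesgue_affine using assms by simp

lemma sep_card:
  assumes e: "\<epsilon> > 0"
    and P: "finite P" "\<And>x. x \<in> P \<Longrightarrow> N x \<le> 1"
      "\<And>x y. x \<in> P \<Longrightarrow> y \<in> P \<Longrightarrow> x \<noteq> y \<Longrightarrow> \<epsilon> < N (x - y)"
  shows "real (card P) \<le> (1 + 2/\<epsilon>)^DIM('a)"
proof -
  define B where "B p = {z. N (z - p) < \<epsilon>/2}" for p
  define m0 where "m0 = measure lebesgue K0"
  have m0: "m0 > 0" using K0_pos by (simp add: m0_def)
  have Bl: "B p \<in> lmeasurable" for p unfolding B_def by (rule lmeas_lt)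
  have mB: "measure lebesgue (B p) = (\<epsilon>/2)^DIM('a) * m0" for p
    unfolding B_def m0_def by (rule measure_ball) (use e in simp)
  have disj: "disjoint_family_on B P"
    unfolding disjoint_family_on_def
  proof (intro ballI impI)
    fix p q assume pq: "p \<in> P" "q \<in> P" "p \<noteq> q"
    show "B p \<inter> B q = {}"
    proof (rule ccontr)
      assume "B p \<inter> B q \<noteq> {}"
      then obtain z where "N (z - p) < \<epsilon>/2" "N (z - q) < \<epsilon>/2" by (auto simp: B_def)
      moreover have "N (p - q) \<le> N (p - z) + N (z - q)" using tri[of "p - z" "z - q"] by simp
      moreover have "N (p - z) = N (z - p)" by (rule sym)
      ultimately show False using P(3)[OF pq] by linarith
    qed
  qed
  have sub: "(\<Union>p\<in>P. B p) \<subseteq> {z. N (z - 0) < 1 + \<epsilon>/2}"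
  proof clarify
    fix p z assume "p \<in> P" "z \<in> B p"
    then have "N (z - p) < \<epsilon>/2" "N p \<le> 1" using P(2) by (auto simp: B_def)
    moreover have "N z \<le> N (z - p) + N p" using tri[of "z - p" p] by simp
    ultimately show "N (z - 0) < 1 + \<epsilon>/2" by simp
  qed
  have "(\<Sum>p\<in>P. measure lebesgue (B p)) = measure lebesgue (\<Union>p\<in>P. B p)"
  proof (rule measure_finite_Union[symmetric, OF P(1) _ disj])
    show "B ` P \<subseteq> sets lebesgue" using Bl by blast
    show "emeasure lebesgue (B p) \<noteq> \<infinity>" for p using fmeasurableD2[OF Bl] by (simp add: infinity_ennreal_def)
  qed
  also have "\<dots> \<le> measure lebesgue {z. N (z - 0) < 1 + \<epsilon>/2}"
    using Bl by (intro measure_mono_fmeasurable sub lmeas_lt sets.finite_UN P(1)) (auto simp: fmeasurable_def)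
  also have "\<dots> = (1 + \<epsilon>/2)^DIM('a) * m0"
    using e by (subst measure_ball) (auto simp: m0_def add_pos_pos)
  finally have "real (card P) * ((\<epsilon>/2)^DIM('a) * m0) \<le> (1 + \<epsilon>/2)^DIM('a) * m0"
    by (simp add: mB)
  then have "real (card P) * (\<epsilon>/2)^DIM('a) \<le> (1 + \<epsilon>/2)^DIM('a)"
    using m0 by (simp add: mult.assoc[symmetric])
  then have "real (card P) \<le> (1 + \<epsilon>/2)^DIM('a) / (\<epsilon>/2)^DIM('a)"
    using e by (subst pos_le_divide_eq) auto
  also have "\<dots> = ((1 + \<epsilon>/2) / (\<epsilon>/2))^DIM('a)"
    by (rule power_divide[symmetric])
  also have "(1 + \<epsilon>/2) / (\<epsilon>/2) = 1 + 2/\<epsilon>"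
    using e by (simp add: field_simps)
  finally show ?thesis .
qed

lemma exists_net:
  assumes e: "\<epsilon> > 0" and T: "\<And>x. x \<in> T \<Longrightarrow> N x \<le> 1"
  shows "\<exists>F. finite F \<and> F \<subseteq> T \<and> real (card F) \<le> (1 + 2/\<epsilon>)^DIM('a) \<and>
           (\<forall>x\<in>T. \<exists>y\<in>F. N (x - y) \<le> \<epsilon>)"
proof -
  define good where "good P \<longleftrightarrow> finite P \<and> P \<subseteq> T \<and>
      (\<forall>x\<in>P. \<forall>y\<in>P. x \<noteq> y \<longrightarrow> \<epsilon> < N (x - y))" for P
  have bnd: "card P < nat \<lceil>(1 + 2/\<epsilon>)^DIM('a)\<rceil> + 1" if "good P" for P
  proof -
    have "real (card P) \<le> (1 + 2/\<epsilon>)^DIM('a)"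
      using that T unfolding good_def by (intro sep_card[OF e]) auto
    then show ?thesis by linarith
  qed
  have "good {}" by (simp add: good_def)
  from ex_has_greatest_nat[of good "{}" card, OF this] bnd
  obtain P where P: "good P" and max: "\<And>Q. good Q \<Longrightarrow> card Q \<le> card P" by blast
  show ?thesis
  proof (intro exI conjI)
    show "finite P" "P \<subseteq> T" using P by (auto simp: good_def)
    show "real (card P) \<le> (1 + 2/\<epsilon>)^DIM('a)"
      using P T unfolding good_def by (intro sep_card[OF e]) auto
    show "\<forall>x\<in>T. \<exists>y\<in>P. N (x - y) \<le> \<epsilon>"
    proof (rule ccontr)
      assume "\<not> ?thesis"
      then obtain x where x: "x \<in> T" "\<And>y. y \<in> P \<Longrightarrow> \<epsilon> < N (x - y)" by force
      have xP: "x \<notin> P"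
      proof
        assume "x \<in> P" then have "\<epsilon> < N (x - x)" by (rule x(2))
        then show False using e hom[of 0 0] by simp
      qed
      have "good (insert x P)"
        using P x sym unfolding good_def by auto
      then have "card (insert x P) \<le> card P" by (rule max)
      then show False using xP P by (simp add: good_def)
    qed
  qed
qed

end

lemma orthonormal_expand:
  fixes Bs :: "'a::euclidean_space set"
  assumes fin: "finite Bs" and po: "pairwise orthogonal Bs" and n1: "\<And>b. b \<in> Bs \<Longrightarrow> norm b = 1"
    and w: "w \<in> span Bs"
  shows "w = (\<Sum>b\<in>Bs. (b \<bullet> w) *\<^sub>R b)"
proof -
  define v where "v = w - (\<Sum>b\<in>Bs. (b \<bullet> w) *\<^sub>R b)"
  have vb: "v \<bullet> b' = 0" if "b' \<in> Bs" for b'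
  proof -
    have "(\<Sum>b\<in>Bs. (b \<bullet> w) *\<^sub>R b) \<bullet> b' = (\<Sum>b\<in>Bs. (b \<bullet> w) * (b \<bullet> b'))"
      by (simp add: inner_sum_left)
    also have "\<dots> = (\<Sum>b\<in>Bs. if b = b' then b' \<bullet> w else 0)"
    proof (rule sum.cong[OF refl])
      fix b assume "b \<in> Bs"
      show "(b \<bullet> w) * (b \<bullet> b') = (if b = b' then b' \<bullet> w else 0)"
      proof (cases "b = b'")
        case True then show ?thesis using n1[OF that] by (simp add: norm_eq_1)
      next
        case False then show ?thesis using po \<open>b \<in> Bs\<close> that
          by (auto simp: pairwise_def orthogonal_def)
      qed
    qed
    also have "\<dots> = b' \<bullet> w" using fin that by simp
    finally have "(\<Sum>b\<in>Bs. (b \<bullet> w) *\<^sub>R b) \<bullet> b' = b' \<bullet> w" .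
    then show ?thesis unfolding v_def inner_diff_left by (simp add: inner_commute[of w b'])
  qed
  have "v \<in> span Bs" unfolding v_def
    by (intro span_diff w span_sum span_scale span_base) 
  then obtain u where "v = (\<Sum>b\<in>Bs. u b *\<^sub>R b)" using span_finite[OF fin] by blast
  then have "v \<bullet> v = (\<Sum>b\<in>Bs. u b * (v \<bullet> b))" by (simp add: inner_sum_right)
  also have "\<dots> = 0" using vb by simp
  finally have "v = 0" by simp
  then show ?thesis by (simp add: v_def)
qed

lemma orthonormal_parseval:
  fixes Bs :: "'a::euclidean_space set"
  assumes fin: "finite Bs" and po: "pairwise orthogonal Bs" and n1: "\<And>b. b \<in> Bs \<Longrightarrow> norm b = 1"
    and w: "w \<in> span Bs"
  shows "(norm w)^2 = (\<Sum>b\<in>Bs. (b \<bullet> w)^2)"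
proof -
  have "(norm w)^2 = w \<bullet> (\<Sum>b\<in>Bs. (b \<bullet> w) *\<^sub>R b)"
    using orthonormal_expand[OF assms] by (simp add: power2_norm_eq_inner)
  also have "\<dots> = (\<Sum>b\<in>Bs. (b \<bullet> w)^2)"
    by (simp add: inner_sum_right power2_eq_square inner_commute)
  finally show ?thesis .
qed

lemma decomp:
  fixes Z :: "real^'d^'d"
  assumes rk: "rank Z \<le> CARD('k)"
  shows "\<exists>(Q::real^'k^'d) (B::real^'d^'k). Z = Q ** B \<and> (\<forall>x. norm (Q *v x) \<le> norm x) \<and> norm B = norm Z"
proof -
  let ?W = "span (columns Z)"
  obtain Bs where Bs: "Bs \<subseteq> ?W" "pairwise orthogonal Bs" "\<And>x. x \<in> Bs \<Longrightarrow> norm x = 1"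
      "independent Bs" "card Bs = dim ?W" "span Bs = ?W"
    using orthonormal_basis_subspace[of ?W] by (metis subspace_span)
  have finBs: "finite Bs" using Bs(4) by (rule finiteI_independent)
  have "card Bs = rank Z" by (metis Bs(5) column_rank_def dim_span)
  with rk have "card Bs \<le> card (UNIV::'k set)" by simp
  then obtain g where g: "g ` Bs \<subseteq> (UNIV::'k set)" "inj_on g Bs"
    using card_le_inj[OF finBs finite_class.finite_UNIV] by blast
  define q where "q c = (if c \<in> g ` Bs then inv_into Bs g c else 0)" for c
  have qg: "q (g b) = b" if "b \<in> Bs" for b using that g(2) by (simp add: q_def)
  have qin: "q c \<in> Bs" if "c \<in> g ` Bs" for c using that by (auto simp: q_def inv_into_into)
  have q0: "q c = 0" if "c \<notin> g ` Bs" for c using that by (simp add: q_def)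
  have sumq: "(\<Sum>c\<in>UNIV. h (q c)) = (\<Sum>b\<in>Bs. h b)" if h0: "h 0 = 0" for h :: "real^'d \<Rightarrow> 'z::comm_monoid_add"
  proof -
    have "(\<Sum>c\<in>UNIV. h (q c)) = (\<Sum>c\<in>g ` Bs. h (q c))"
      by (rule sum.mono_neutral_right) (auto simp: q0 h0)
    also have "\<dots> = (\<Sum>b\<in>Bs. h (q (g b)))" by (rule sum.reindex[OF g(2), unfolded comp_def])
    also have "\<dots> = (\<Sum>b\<in>Bs. h b)" by (simp add: qg)
    finally show ?thesis .
  qed
  have qorth: "q c \<bullet> q c' = (if c = c' then (if c \<in> g ` Bs then 1 else 0) else 0)" for c c'
  proof (cases "c \<in> g ` Bs \<and> c' \<in> g ` Bs")
    case True
    then obtain b b' where bb: "b \<in> Bs" "b' \<in> Bs" "c = g b" "c' = g b'" by blast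
    show ?thesis
    proof (cases "c = c'")
      case True then show ?thesis using bb Bs(3)[of b'] qg by (simp add: norm_eq_1)
    next
      case False
      then have "b \<noteq> b'" using bb by auto
      then show ?thesis using False bb Bs(2) qg by (auto simp: pairwise_def orthogonal_def)
    qed
  next
    case False then show ?thesis using q0 by auto
  qed
  define Q :: "real^'k^'d" where "Q = (\<chi> i c. q c $ i)"
  define B :: "real^'d^'k" where "B = (\<chi> c j. q c \<bullet> column j Z)"
  have colW: "column j Z \<in> span Bs" for j
    using Bs(6) by (auto simp: columns_def intro: span_base)
  have "Z = Q ** B"
  proof -
    have "Z $ i $ j = (Q ** B) $ i $ j" for i j
    proof -
      have "(Q ** B) $ i $ j = (\<Sum>c\<in>UNIV. ((q c \<bullet> column j Z) *\<^sub>R q c) $ i)"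
        by (simp add: Q_def B_def matrix_matrix_mult_def mult.commute)
      also have "\<dots> = (\<Sum>b\<in>Bs. ((b \<bullet> column j Z) *\<^sub>R b) $ i)"
        by (rule sumq) simp
      also have "\<dots> = (\<Sum>b\<in>Bs. (b \<bullet> column j Z) *\<^sub>R b) $ i" by simp
      also have "\<dots> = column j Z $ i"
        using orthonormal_expand[OF finBs Bs(2,3) colW[of j]] by simp
      finally show ?thesis by (simp add: column_def)
    qed
    then show ?thesis by (simp add: vec_eq_iff)
  qed
  moreover have "norm (Q *v x) \<le> norm x" for x
  proof -
    have Qx: "Q *v x = (\<Sum>c\<in>UNIV. x $ c *\<^sub>R q c)"
      by (simp add: Q_def vec_eq_iff matrix_vector_mult_def mult.commute)
    have "(norm (Q *v x))^2 = (\<Sum>c\<in>UNIV. \<Sum>c'\<in>UNIV. x $ c * (x $ c' * (q c' \<bullet> q c)))"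
      unfolding Qx power2_norm_eq_inner by (simp add: inner_sum_left inner_sum_right sum_distrib_left)
    also have "\<dots> = (\<Sum>c\<in>UNIV. x $ c * x $ c * (if c \<in> g ` Bs then 1 else 0))"
    proof -
      have e: "x $ c * (x $ c' * (q c' \<bullet> q c)) = (if c' = c then x $ c * x $ c * (if c \<in> g ` Bs then 1 else 0) else 0)" for c c'
        by (simp add: qorth)
      show ?thesis unfolding e by simp
    qed
    also have "\<dots> \<le> (\<Sum>c\<in>UNIV. x $ c * x $ c)"
      by (intro sum_mono) auto
    also have "\<dots> = (norm x)^2" by (simp add: power2_norm_eq_inner inner_vec_def)
    finally show ?thesis by (simp add: power2_le_iff_abs_le)
  qed
  moreover have "norm B = norm Z"
  proof -
    have "(norm B)^2 = (\<Sum>j\<in>UNIV. (norm (column j B))^2)" by (rule norm_sq_columns)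
    also have "\<dots> = (\<Sum>j\<in>UNIV. \<Sum>c\<in>UNIV. (q c \<bullet> column j Z)^2)"
      unfolding power2_norm_eq_inner by (simp add: inner_vec_def column_def B_def power2_eq_square)
    also have "\<dots> = (\<Sum>j\<in>UNIV. \<Sum>b\<in>Bs. (b \<bullet> column j Z)^2)"
      by (intro sum.cong refl sumq) simp
    also have "\<dots> = (\<Sum>j\<in>UNIV. (norm (column j Z))^2)"
      using orthonormal_parseval[OF finBs Bs(2,3) colW] by simp
    also have "\<dots> = (norm Z)^2" by (rule norm_sq_columns[symmetric])
    finally show ?thesis by (simp add: power2_eq_iff_nonneg)
  qed
  ultimately show ?thesis by blast
qed

abbreviation Nop :: "real^'k^'d \<Rightarrow> real" where "Nop Q \<equiv> onorm ((*v) Q)"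

lemma column_mm: fixes Q :: "real^'k^'d" shows "column j (Q ** B) = Q *v column j B"
  by (simp add: vec_eq_iff column_def matrix_matrix_mult_def matrix_vector_mult_def)

lemma Nop_vec: fixes Q :: "real^'k^'d" shows "norm (Q *v x) \<le> Nop Q * norm x"
  by (rule onorm[OF matrix_vector_mul_bounded_linear])

lemma norm_mm_le: fixes Q :: "real^'k^'d" and B :: "real^'n^'k" shows "norm (Q ** B) \<le> Nop Q * norm B"
proof -
  have "(norm (Q ** B))^2 = (\<Sum>j\<in>UNIV. (norm (Q *v column j B))^2)"
    by (simp add: norm_sq_columns column_mm)
  also have "\<dots> \<le> (\<Sum>j\<in>UNIV. (Nop Q * norm (column j B))^2)"
    by (intro sum_mono power_mono Nop_vec) auto
  also have "\<dots> = (Nop Q * norm B)^2"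
    by (simp add: power_mult_distrib sum_distrib_left norm_sq_columns[of B])
  finally show ?thesis
    using onorm_pos_le[OF matrix_vector_mul_bounded_linear, of Q]
    by (simp add: power2_le_iff_abs_le)
qed

lemma norm_mv_frob: fixes Q :: "real^'k^'d" shows "norm (Q *v x) \<le> norm Q * norm x"
proof -
  have "(norm (Q *v x))^2 = (\<Sum>i\<in>UNIV. (Q$i \<bullet> x)^2)"
    unfolding power2_norm_eq_inner by (simp add: inner_vec_def matrix_vector_mul_component power2_eq_square)
  also have "\<dots> \<le> (\<Sum>i\<in>UNIV. (norm (Q$i) * norm x)^2)"
  proof (rule sum_mono)
    fix i
    have "\<bar>Q$i \<bullet> x\<bar> \<le> norm (Q$i) * norm x" by (rule Cauchy_Schwarz_ineq2)
    then show "(Q$i \<bullet> x)^2 \<le> (norm (Q$i) * norm x)^2"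
      by (metis abs_ge_zero power2_abs power_mono)
  qed
  also have "\<dots> = (norm Q * norm x)^2"
    by (simp add: power_mult_distrib sum_distrib_right norm_sq_rows[of Q])
  finally show ?thesis by (simp add: power2_le_iff_abs_le)
qed

lemma Nop_le_frob: fixes Q :: "real^'k^'d" shows "Nop Q \<le> norm Q"
  by (rule onorm_le) (rule norm_mv_frob)

lemma frob_le_Nop: "norm (Q::real^'k^'d) \<le> real CARD('k) * Nop Q"
proof -
  have "(norm Q)^2 = (\<Sum>j\<in>UNIV. (norm (column j Q))^2)" by (rule norm_sq_columns)
  also have "\<dots> \<le> (\<Sum>j\<in>(UNIV::'k set). (Nop Q)^2)"
  proof (rule sum_mono)
    fix j
    have "norm (column j Q) \<le> Nop Q" by (rule norm_column_le_onorm)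
    then show "(norm (column j Q))^2 \<le> (Nop Q)^2" by (intro power_mono) auto
  qed
  also have "\<dots> = real CARD('k) * (Nop Q)^2" by simp
  also have "\<dots> \<le> (real CARD('k) * Nop Q)^2"
  proof -
    have "real CARD('k) \<ge> 1" by (simp add: Suc_le_eq)
    then have "real CARD('k) \<le> (real CARD('k))^2" by (simp add: power2_eq_square)
    then show ?thesis by (simp add: power_mult_distrib mult_right_mono)
  qed
  finally show ?thesis
    using onorm_pos_le[OF matrix_vector_mul_bounded_linear, of Q]
    by (simp add: power2_le_iff_abs_le)
qed

lemma mv_add: "(A + B) *v x = A *v x + B *v (x::real^'n)"
  by (simp add: matrix_vector_mult_add_rdistrib)

interpretation NopN: normlike "Nop :: real^'k^'d \<Rightarrow> real" "1 / real CARD('k)" 1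
proof
  fix x y :: "real^'k^'d"
  show "Nop (x + y) \<le> Nop x + Nop y"
    unfolding mv_add[abs_def]
    by (rule onorm_triangle) (rule matrix_vector_mul_bounded_linear)+
next
  fix c and x :: "real^'k^'d"
  have "((*v) (c *\<^sub>R x)) = (\<lambda>v. c *\<^sub>R (x *v v))"
    by (simp add: fun_eq_iff vec_eq_iff matrix_vector_mult_def sum_distrib_left mult.assoc)
  then show "Nop (c *\<^sub>R x) = \<bar>c\<bar> * Nop x"
    by (simp add: onorm_scaleR[OF matrix_vector_mul_bounded_linear])
next
  fix x :: "real^'k^'d"
  show "1 / real CARD('k) * norm x \<le> Nop x"
    using frob_le_Nop[of x] by (simp add: field_simps)
  show "Nop x \<le> 1 * norm x" using Nop_le_frob by simp
qed simp

interpretation FrobN: normlike "norm :: real^'d^'k \<Rightarrow> real" 1 1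
  by standard (auto simp: norm_triangle_ineq)

lemma nets:
  obtains FQ :: "(real^'k^'d) set" and FB :: "(real^'d^'k) set"
  where "finite FQ" "finite FB"
    "real (card FQ) \<le> 9 ^ (CARD('d) * CARD('k))" "real (card FB) \<le> 9 ^ (CARD('d) * CARD('k))"
    "\<And>Q. Q \<in> FQ \<Longrightarrow> Nop Q \<le> 1" "\<And>B. B \<in> FB \<Longrightarrow> norm B \<le> 1"
    "\<And>Q. Nop Q \<le> 1 \<Longrightarrow> \<exists>Q0\<in>FQ. Nop (Q - Q0) \<le> 1/4"
    "\<And>B. norm B \<le> 1 \<Longrightarrow> \<exists>B0\<in>FB. norm (B - B0) \<le> 1/4"
proof -
  obtain FQ :: "(real^'k^'d) set" where FQ: "finite FQ" "FQ \<subseteq> {Q. Nop Q \<le> 1}"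
    "real (card FQ) \<le> (1 + 2/(1/4))^DIM(real^'k^'d)"
    "\<forall>x\<in>{Q. Nop Q \<le> 1}. \<exists>y\<in>FQ. Nop (x - y) \<le> 1/4"
    using NopN.exists_net[of "1/4" "{Q. Nop Q \<le> 1}"] by auto
  obtain FB :: "(real^'d^'k) set" where FB: "finite FB" "FB \<subseteq> {B. norm B \<le> 1}"
    "real (card FB) \<le> (1 + 2/(1/4))^DIM(real^'d^'k)"
    "\<forall>x\<in>{B. norm B \<le> 1}. \<exists>y\<in>FB. norm (x - y) \<le> 1/4"
    using FrobN.exists_net[of "1/4" "{B. norm B \<le> 1}"] by auto
  show thesis
  proof (rule that[of FQ FB])
    show "real (card FQ) \<le> 9 ^ (CARD('d) * CARD('k))" using FQ(3) by (simp add: mult.commute)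
    show "real (card FB) \<le> 9 ^ (CARD('d) * CARD('k))" using FB(3) by (simp add: mult.commute)
  qed (use FQ FB in auto)
qed

lemma scale_mm: "(c *\<^sub>R Q) ** B = c *\<^sub>R (Q ** (B::real^'n^'m))"
  by (simp add: vec_eq_iff matrix_matrix_mult_def sum_distrib_left mult.assoc)
lemma mm_scale: "Q ** (c *\<^sub>R B) = c *\<^sub>R (Q ** (B::real^'n^'m))"
  by (simp add: vec_eq_iff matrix_matrix_mult_def sum_distrib_left mult_ac)
lemma mm_diff_r: "((A::real^'n^'m) - B) ** C = A ** C - B ** C"
  by (simp add: vec_eq_iff matrix_matrix_mult_def sum_subtractf algebra_simps)

lemma sup_bound:
  fixes G :: "real^'d^'d" and FQ :: "(real^'k^'d) set" and FB :: "(real^'d^'k) set"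
    and Q :: "real^'k^'d" and B :: "real^'d^'k"
  assumes FQ1: "\<And>Q. Q \<in> FQ \<Longrightarrow> Nop Q \<le> 1" and FB1: "\<And>B. B \<in> FB \<Longrightarrow> norm B \<le> 1"
    and aQ: "\<And>Q. Nop Q \<le> 1 \<Longrightarrow> \<exists>Q0\<in>FQ. Nop (Q - Q0) \<le> 1/4"
    and aB: "\<And>B. norm B \<le> 1 \<Longrightarrow> \<exists>B0\<in>FB. norm (B - B0) \<le> 1/4"
    and hyp: "\<And>Q B. Q \<in> FQ \<Longrightarrow> B \<in> FB \<Longrightarrow> G \<bullet> (Q ** B) \<le> s"
    and Q: "Nop Q \<le> 1" and B: "norm B \<le> 1"
  shows "G \<bullet> (Q ** B) \<le> 2 * s"
proof -
  define V where "V = {G \<bullet> (Q ** B) | (Q::real^'k^'d) (B::real^'d^'k). Nop Q \<le> 1 \<and> norm B \<le> 1}"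
  define S where "S = Sup V"
  have bdd: "bdd_above V"
  proof (rule bdd_aboveI)
    fix v assume "v \<in> V"
    then obtain Q :: "real^'k^'d" and B :: "real^'d^'k" where v: "v = G \<bullet> (Q ** B)" "Nop Q \<le> 1" "norm B \<le> 1"
      by (auto simp: V_def)
    have "v \<le> norm G * norm (Q ** B)" unfolding v by (rule norm_cauchy_schwarz)
    also have "norm (Q ** B) \<le> 1"
    proof -
      have "norm (Q ** B) \<le> Nop Q * norm B" by (rule norm_mm_le)
      also have "\<dots> \<le> 1 * 1" using v by (intro mult_mono) (auto simp: onorm_pos_le[OF matrix_vector_mul_bounded_linear])
      finally show ?thesis by simp
    qed
    then have "norm G * norm (Q ** B) \<le> norm G" by (simp add: mult_left_le)
    finally show "v \<le> norm G" .
  qed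
  have inV: "G \<bullet> (Q ** B) \<in> V" if "Nop Q \<le> 1" "norm B \<le> 1" for Q :: "real^'k^'d" and B :: "real^'d^'k"
    using that unfolding V_def by blast
  have leS: "G \<bullet> (Q ** B) \<le> S" if "Nop Q \<le> 1" "norm B \<le> 1" for Q :: "real^'k^'d" and B :: "real^'d^'k"
    unfolding S_def by (rule cSup_upper[OF inV[OF that] bdd])
  have each: "G \<bullet> (Q ** B) \<le> s + S / 2" if QB: "Nop Q \<le> 1" "norm B \<le> 1" for Q :: "real^'k^'d" and B :: "real^'d^'k"
  proof -
    obtain Q0 where Q0: "Q0 \<in> FQ" "Nop (Q - Q0) \<le> 1/4" using aQ[OF QB(1)] by blast
    obtain B0 where B0: "B0 \<in> FB" "norm (B - B0) \<le> 1/4" using aB[OF QB(2)] by blast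
    have dec: "Q ** B = Q0 ** B0 + (1/4) *\<^sub>R ((4 *\<^sub>R (Q - Q0)) ** B) + (1/4) *\<^sub>R (Q0 ** (4 *\<^sub>R (B - B0)))"
      by (simp add: scale_mm mm_scale mm_diff_r mm_diff_l algebra_simps)
    have t1: "G \<bullet> ((4 *\<^sub>R (Q - Q0)) ** B) \<le> S"
      by (rule leS) (use Q0 QB NopN.hom[of 4 "Q - Q0"] in auto)
    have t2: "G \<bullet> (Q0 ** (4 *\<^sub>R (B - B0))) \<le> S"
      by (rule leS) (use B0 FQ1[OF Q0(1)] in auto)
    have "G \<bullet> (Q ** B) = G \<bullet> (Q0 ** B0) + (1/4) * (G \<bullet> ((4 *\<^sub>R (Q - Q0)) ** B))
        + (1/4) * (G \<bullet> (Q0 ** (4 *\<^sub>R (B - B0))))"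
      unfolding dec by (simp add: inner_add_right)
    also have "\<dots> \<le> s + (1/4) * S + (1/4) * S"
      using hyp[OF Q0(1) B0(1)] t1 t2 by linarith
    finally show ?thesis by simp
  qed
  have "S \<le> s + S / 2"
    unfolding S_def
  proof (rule cSup_least)
    have "((*v) (0::real^'k^'d)) = (\<lambda>x. 0)" by (simp add: fun_eq_iff)
    then have "Nop (0::real^'k^'d) = 0" by (simp add: onorm_zero)
    then show "V \<noteq> {}" using inV[of 0 0] by auto
    fix v assume "v \<in> V"
    then show "v \<le> s + Sup V / 2" using each unfolding V_def S_def by blast
  qed
  then have "S \<le> 2 * s" by simp
  then show ?thesis using leS[OF Q B] by simp
qed

lemma (in prob_space) subg_tail:
  fixes eps :: "'a \<Rightarrow> nat \<Rightarrow> real" and c :: "nat \<Rightarrow> real"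
  assumes rv: "\<And>i. i < N \<Longrightarrow> (\<lambda>x. eps x i) \<in> borel_measurable M"
    and indep: "indep_vars (\<lambda>_. borel) (\<lambda>i x. eps x i) {..<N}"
    and subg: "\<And>i. i < N \<Longrightarrow> subgaussian M (\<lambda>x. eps x i) \<sigma>"
    and V: "\<sigma>^2 * (\<Sum>i<N. (c i)^2) \<le> V" "V > 0" and s: "s > 0"
  shows "prob {x\<in>space M. (\<Sum>i<N. c i * eps x i) \<ge> s} \<le> exp (- (s^2) / (2 * V))"
proof -
  define l where "l = s / V"
  have l: "l > 0" using s V by (simp add: l_def)
  have mf: "(\<lambda>x. \<Sum>i<N. c i * eps x i) \<in> borel_measurable M"
    by (intro borel_measurable_sum borel_measurable_times borel_measurable_const rv) auto
  have "ennreal (prob {x\<in>space M. (\<Sum>i<N. c i * eps x i) \<ge> s}) = emeasure M {x\<in>space M. (\<Sum>i<N. c i * eps x i) \<ge> s}"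
    by (simp add: emeasure_eq_measure)
  also have "\<dots> \<le> ennreal (exp (-l * s)) * (\<integral>\<^sup>+x. ennreal (exp (l * (\<Sum>i<N. c i * eps x i))) * indicator (space M) x \<partial>M)"
    by (intro Chernoff_ineq_nn_integral_ge l) (use mf in auto)
  also have "(\<integral>\<^sup>+x. ennreal (exp (l * (\<Sum>i<N. c i * eps x i))) * indicator (space M) x \<partial>M)
      = (\<integral>\<^sup>+x. (\<Prod>i<N. ennreal (exp (l * c i * eps x i))) \<partial>M)"
    by (intro nn_integral_cong)
       (simp add: sum_distrib_left exp_sum prod_ennreal mult.assoc)
  also have "\<dots> = (\<Prod>i<N. \<integral>\<^sup>+x. ennreal (exp (l * c i * eps x i)) \<partial>M)"
  proof (rule indep_vars_nn_integral)
    show "indep_vars (\<lambda>_. borel) (\<lambda>i x. ennreal (exp (l * c i * eps x i))) {..<N}"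
      by (rule indep_vars_compose2[OF indep]) auto
  qed auto
  also have "ennreal (exp (-l * s)) * \<dots> \<le> ennreal (exp (-l * s)) * (\<Prod>i<N. ennreal (exp ((l * c i)^2 * \<sigma>^2 / 2)))"
  proof (intro mult_left_mono prod_mono_ennreal)
    fix i assume "i \<in> {..<N}"
    then have i: "i < N" by simp
    have int: "integrable M (\<lambda>x. exp ((l * c i) * eps x i))"
      using subg[OF i] unfolding subgaussian_def by blast
    have "(\<integral>\<^sup>+x. ennreal (exp (l * c i * eps x i)) \<partial>M) = ennreal (\<integral>x. exp (l * c i * eps x i) \<partial>M)"
      by (intro nn_integral_eq_integral) (use int in auto)
    also have "(\<integral>x. exp (l * c i * eps x i) \<partial>M) \<le> exp ((l * c i)^2 * \<sigma>^2 / 2)"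
      using subg[OF i] unfolding subgaussian_def by blast
    finally show "(\<integral>\<^sup>+x. ennreal (exp (l * c i * eps x i)) \<partial>M) \<le> ennreal (exp ((l * c i)^2 * \<sigma>^2 / 2))"
      by (simp add: ennreal_leI)
  qed auto
  also have "ennreal (exp (-l * s)) * (\<Prod>i<N. ennreal (exp ((l * c i)^2 * \<sigma>^2 / 2)))
      = ennreal (exp (-l * s) * (\<Prod>i<N. exp ((l * c i)^2 * \<sigma>^2 / 2)))"
    by (simp add: prod_ennreal ennreal_mult[symmetric] prod_nonneg)
  also have "exp (-l * s) * (\<Prod>i<N. exp ((l * c i)^2 * \<sigma>^2 / 2))
      = exp (-l * s + l^2 / 2 * (\<sigma>^2 * (\<Sum>i<N. (c i)^2)))"
  proof -
    have "(\<Sum>i<N. (l * c i)^2 * \<sigma>^2 / 2) = l^2 / 2 * (\<sigma>^2 * (\<Sum>i<N. (c i)^2))"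
      by (simp add: sum_distrib_left sum_divide_distrib power_mult_distrib mult_ac)
    then have "exp (-l * s + l^2 / 2 * (\<sigma>^2 * (\<Sum>i<N. (c i)^2)))
        = exp (-l * s) * exp (\<Sum>i<N. (l * c i)^2 * \<sigma>^2 / 2)"
      by (simp only: exp_add)
    moreover have "exp (\<Sum>i<N. (l * c i)^2 * \<sigma>^2 / 2) = (\<Prod>i<N. exp ((l * c i)^2 * \<sigma>^2 / 2))"
      by (rule exp_sum) simp
    ultimately show ?thesis by simp
  qed
  also have "\<dots> \<le> ennreal (exp (-l * s + l^2 / 2 * V))"
    using V l by (intro ennreal_leI) (simp add: mult_left_mono)
  also have "-l * s + l^2 / 2 * V = - (s^2) / (2 * V)"
    using V by (simp add: l_def power2_eq_square field_simps)
  finally show ?thesis by (subst (asm) ennreal_le_iff) auto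
qed

lemma card_plus_r: "CARD('r + 'r) = 2 * CARD('r::finite)"
  by simp

lemma rank_Delta:
  fixes Uh Up :: "real^'r^'d"
  shows "rank (Uh ** transpose Uh - Up ** transpose Up) \<le> CARD('r + 'r)"
proof -
  define W :: "real^('r + 'r)^'d" where "W = (\<chi> i c. case c of Inl a \<Rightarrow> Uh$i$a | Inr a \<Rightarrow> Up$i$a)"
  define V :: "real^'d^('r + 'r)" where "V = (\<chi> c j. case c of Inl a \<Rightarrow> Uh$j$a | Inr a \<Rightarrow> - Up$j$a)"
  have "Uh ** transpose Uh - Up ** transpose Up = W ** V"
  proof -
    have "(W ** V) $ i $ j = (Uh ** transpose Uh - Up ** transpose Up) $ i $ j" for i j
    proof -
      have "(W ** V) $ i $ j = (\<Sum>c\<in>UNIV <+> UNIV. W$i$c * V$c$j)"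
        by (simp add: matrix_matrix_mult_def)
      also have "\<dots> = (\<Sum>a\<in>UNIV. Uh$i$a * Uh$j$a) + (\<Sum>a\<in>UNIV. Up$i$a * (- Up$j$a))"
        by (subst sum.Plus) (auto simp: W_def V_def)
      also have "\<dots> = (Uh ** transpose Uh - Up ** transpose Up) $ i $ j"
        by (simp add: matrix_matrix_mult_def transpose_def sum_negf)
      finally show ?thesis .
    qed
    then show ?thesis by (simp add: vec_eq_iff)
  qed
  moreover have "rank (W ** V) \<le> CARD('r + 'r)"
    using rank_mul_le_left[of W V] rank_bound[of W] by simp
  ultimately show ?thesis by simp
qed

lemma final_arith:
  fixes d np \<alpha> \<beta> \<sigma> L L' s nD nH n21 :: real
  assumes d: "d \<ge> 1" and np: "np > 0" and a: "\<alpha> > 0" and g: "3 * \<alpha> - 2 * \<beta> > 0" "3 * \<alpha> - 2 * \<beta> \<le> \<alpha>"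
    and b: "\<beta> > 0" and sg: "\<sigma> > 0" and LL: "L' \<le> L" "L' \<ge> 0"
    and s: "s = sqrt (2 * (d^2 * np * \<beta> / 4) * L')"
    and hD: "nD \<le> 4 * s / (\<alpha> * np)" and hH: "(4/5) * \<sigma>^2 * nH^2 \<le> nD^2" and nH: "nH \<ge> 0"
    and nD: "nD \<ge> 0"
    and h21: "n21 \<le> sqrt d * nH"
  shows "n21 \<le> 8 * d * sqrt (2 * \<beta>) / ((3 * \<alpha> - 2 * \<beta>) * \<sigma>) * sqrt (d * L / np)"
proof -
  define \<gamma> where "\<gamma> = 3 * \<alpha> - 2 * \<beta>"
  have gp: "\<gamma> > 0" "\<gamma> \<le> \<alpha>" using g by (auto simp: \<gamma>_def)
  have "0 \<le> 2 * (d^2 * np * \<beta> / 4) * L'" using np b LL by (intro mult_nonneg_nonneg) auto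
  then have s0: "s \<ge> 0" unfolding s by (rule real_sqrt_ge_zero)
  from \<open>0 \<le> 2 * (d^2 * np * \<beta> / 4) * L'\<close>
  have "(sqrt (2 * (d^2 * np * \<beta> / 4) * L'))^2 = 2 * (d^2 * np * \<beta> / 4) * L'"
    by (rule real_sqrt_pow2)
  then have s2: "s^2 = d^2 * np * \<beta> * L' / 2"
    unfolding s by simp
  have "(\<sigma> * nH)^2 \<le> (9/8 * nD)^2"
  proof -
    have "(\<sigma> * nH)^2 \<le> (5/4) * nD^2" using hH by (simp add: power_mult_distrib)
    also have "\<dots> \<le> (9/8 * nD)^2"
    proof -
      have "(9/8 * nD)^2 = (81/64) * nD^2" by (simp add: power2_eq_square)
      moreover have "nD^2 \<ge> 0" by simp
      ultimately show ?thesis by linarith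
    qed
    finally show ?thesis .
  qed
  then have "\<sigma> * nH \<le> 9/8 * nD" by (rule power2_le_imp_le) (use nD in simp)
  also have "\<dots> \<le> 9/8 * (4 * s / (\<alpha> * np))" by (rule mult_left_mono[OF hD]) simp
  finally have "nH * \<sigma> \<le> 9/8 * (4 * s / (\<alpha> * np))" by (simp add: mult.commute)
  then have "nH \<le> (9/8 * (4 * s / (\<alpha> * np))) / \<sigma>" using pos_le_divide_eq[OF sg] by blast
  also have "(9/8 * (4 * s / (\<alpha> * np))) / \<sigma> = (9/2) * s / (\<alpha> * np * \<sigma>)" by simp
  finally have "nH \<le> (9/2) * s / (\<alpha> * np * \<sigma>)" .
  then have "n21 \<le> sqrt d * ((9/2) * s / (\<alpha> * np * \<sigma>))"
    using h21 d by (meson mult_left_mono order_trans real_sqrt_ge_zero zero_le_one order.trans)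
  also have "\<dots> \<le> 8 * d * sqrt (2 * \<beta>) / (\<gamma> * \<sigma>) * sqrt (d * L / np)" (is "?X \<le> ?T")
  proof (rule power2_le_imp_le)
    show "?T \<ge> 0" using gp sg d b LL np by simp
    define K where "K = d^3 * \<beta> / (np * \<sigma>^2)"
    have K0: "K > 0" using d b np sg by (simp add: K_def)
    have X2: "?X^2 = (81/8) * K * L' / \<alpha>^2"
    proof -
      have "?X^2 = d * ((81/4) * s^2 / (\<alpha>^2 * np^2 * \<sigma>^2))"
        using d by (simp add: power_mult_distrib power_divide)
      also have "\<dots> = d * ((81/4) * (d^2 * np * \<beta> * L' / 2) / (\<alpha>^2 * np^2 * \<sigma>^2))"
        by (simp only: s2)
      also have "\<dots> = (81/8) * K * L' / \<alpha>^2"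
        using np sg a unfolding K_def by (simp add: power2_eq_square power3_eq_cube mult_ac)
      finally show ?thesis .
    qed
    have T2: "?T^2 = 128 * K * L / \<gamma>^2"
    proof -
      have "?T^2 = 64 * d^2 * (sqrt (2 * \<beta>))^2 / (\<gamma>^2 * \<sigma>^2) * (sqrt (d * L / np))^2"
        by (simp add: power_mult_distrib power_divide)
      also have "\<dots> = 64 * d^2 * (2 * \<beta>) / (\<gamma>^2 * \<sigma>^2) * (d * L / np)"
        using b d LL np by simp
      also have "\<dots> = 128 * K * L / \<gamma>^2"
        using gp sg np unfolding K_def by (simp add: field_simps power2_eq_square power3_eq_cube)
      finally show ?thesis .
    qed
    have "L' / \<alpha>^2 \<le> L / \<alpha>^2" using LL a by (simp add: divide_right_mono)
    also have "\<dots> \<le> L / \<gamma>^2"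
    proof (rule divide_left_mono)
      show "\<gamma>^2 \<le> \<alpha>^2" using gp by (intro power_mono) auto
    qed (use LL gp in auto)
    finally have q: "L' / \<alpha>^2 \<le> L / \<gamma>^2" .
    have "(81/8) * K * L' / \<alpha>^2 = (81/8) * K * (L' / \<alpha>^2)" by simp
    also have "\<dots> \<le> (81/8) * K * (L / \<gamma>^2)" using q K0 by (intro mult_left_mono) auto
    also have "\<dots> \<le> 128 * K * (L / \<gamma>^2)"
      using K0 LL gp by (intro mult_right_mono) auto
    finally show "?X^2 \<le> ?T^2" unfolding X2 T2 by simp
  qed
  finally show ?thesis by (simp add: \<gamma>_def)
qed

lemma basic_ineq:
  fixes e a :: "nat \<Rightarrow> real"
  assumes "(\<Sum>i<N. (e i - a i)^2) \<le> (\<Sum>i<N. (e i)^2)"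
  shows "(\<Sum>i<N. (a i)^2) \<le> 2 * (\<Sum>i<N. e i * a i)"
proof -
  have "(\<Sum>i<N. (e i - a i)^2) = (\<Sum>i<N. (e i)^2) - 2 * (\<Sum>i<N. e i * a i) + (\<Sum>i<N. (a i)^2)"
    by (simp add: power2_diff sum.distrib sum_subtractf sum_distrib_left mult.assoc)
  then show ?thesis using assms by linarith
qed

theorem corollary3:
  fixes Up Ug :: "real^'r^'d"
    and A :: "nat \<Rightarrow> real^'d^'d"
    and M :: "'a measure"
    and eps :: "'a \<Rightarrow> nat \<Rightarrow> real"
    and Uhat :: "'a \<Rightarrow> real^'r^'d"
    and np :: nat and \<alpha> \<beta> \<delta> :: real
  defines "d \<equiv> CARD('d)" and "r \<equiv> CARD('r)"
  defines "N \<equiv> d^2 * np"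
  defines "X \<equiv> (\<lambda>x i. A i \<bullet> (Up ** transpose Up) + eps x i)"
  assumes rankUp: "rank Up = r"
    and rwc: "RWC (2 * r) (\<alpha> / real d ^ 2) (\<beta> / real d ^ 2) A N"
    and P: "prob_space M"
    and rv: "\<And>i. i < N \<Longrightarrow> (\<lambda>x. eps x i) \<in> borel_measurable M"
    and indep: "prob_space.indep_vars M (\<lambda>_. borel) (\<lambda>i x. eps x i) {..<N}"
    and subg: "\<And>i. i < N \<Longrightarrow> subgaussian M (\<lambda>x. eps x i) (real d / 2)"
    and minim: "\<And>x (U::real^'r^'d). x \<in> space M \<Longrightarrow> loss A N (X x) (Uhat x) \<le> loss A N (X x) U"
    and \<delta>: "0 < \<delta>" "\<delta> < 1"
  shows "\<exists>E \<in> sets M. measure M E \<ge> 1 - \<delta> \<and>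
    (\<forall>x\<in>E. ell (Uhat x) Ug \<le> norm21 (Ug - Up)
        + norm21 (Up ** (procR (Uhat x) Up - procR (Uhat x) Ug))
        + 8 * real d * sqrt (2 * \<beta>) / ((3 * \<alpha> - 2 * \<beta>) * sigma_r Up)
          * sqrt (real d * (2 * real r * (2 * real d + 1) * ln (36 * sqrt 2) + ln (2 / \<delta>)) / real np))"
proof -
  interpret P: prob_space M by (rule P)
  have d1: "real d \<ge> 1" unfolding d_def by (simp add: Suc_le_eq)
  have r1: "real r \<ge> 1" unfolding r_def by (simp add: Suc_le_eq)
  have dd: "real d ^ 2 > 0" using d1 by simp
  have ab0: "3 * (\<alpha> / real d ^ 2) > 2 * (\<beta> / real d ^ 2)" using rwc by (simp add: RWC_def)
  have RW: "\<And>Z::real^'d^'d. rank Z \<le> 2 * r \<Longrightarrow>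
      \<alpha> / real d ^ 2 * (norm Z)^2 \<le> opnormsq A N Z / real N \<and> opnormsq A N Z / real N \<le> \<beta> / real d ^ 2 * (norm Z)^2"
    using rwc unfolding RWC_def by blast
  have ab: "3 * \<alpha> > 2 * \<beta>"
  proof -
    have "3 * \<alpha> / real d ^ 2 > 2 * \<beta> / real d ^ 2" using ab0 by simp
    then show ?thesis using dd by (simp add: divide_less_cancel)
  qed
  have cardk: "CARD('r + 'r) = 2 * r" by (simp add: r_def)
  obtain i0 :: 'd where True by simp
  obtain c0 :: "'r + 'r" where True by simp
  define Q1 :: "real^('r + 'r)^'d" where "Q1 = (\<chi> i c. if i = i0 \<and> c = c0 then 1 else 0)"
  define Z0 where "Z0 = Q1 ** transpose Q1"
  have Z0rank: "rank Z0 \<le> 2 * r"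
    using rank_mul_le_left[of Q1 "transpose Q1"] rank_bound[of Q1] cardk by (simp add: Z0_def)
  have "Z0 $ i0 $ i0 = 1"
    by (simp add: Z0_def Q1_def matrix_matrix_mult_def transpose_def if_distrib cong: if_cong)
  then have "Z0 \<noteq> 0" by auto
  then have nZ: "(norm Z0)^2 > 0" by simp
  have np0: "np > 0"
  proof (rule ccontr)
    assume "\<not> np > 0"
    then have "N = 0" by (simp add: N_def)
    then have "\<alpha> / real d ^ 2 * (norm Z0)^2 \<le> 0" "0 \<le> \<beta> / real d ^ 2 * (norm Z0)^2"
      using RW[OF Z0rank] by auto
    then have "\<alpha> / real d ^ 2 * (norm Z0)^2 \<le> 0 * (norm Z0)^2" "0 * (norm Z0)^2 \<le> \<beta> / real d ^ 2 * (norm Z0)^2"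
      by simp_all
    then have "\<alpha> / real d ^ 2 \<le> 0" "0 \<le> \<beta> / real d ^ 2"
      using mult_right_le_imp_le nZ by blast+
    then have "\<alpha> \<le> 0" "0 \<le> \<beta>" using dd by (auto simp: divide_le_0_iff zero_le_divide_iff)
    then show False using ab by linarith
  qed
  have aleb: "\<alpha> \<le> \<beta>"
  proof -
    have "\<alpha> / real d ^ 2 * (norm Z0)^2 \<le> \<beta> / real d ^ 2 * (norm Z0)^2"
      using RW[OF Z0rank] by linarith
    then have "\<alpha> / real d ^ 2 \<le> \<beta> / real d ^ 2" using mult_right_le_imp_le nZ by blast
    then show ?thesis using dd by (simp add: divide_le_cancel)
  qed
  have apos: "\<alpha> > 0" using ab aleb by linarith
  have bpos: "\<beta> > 0" using apos aleb by linarith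
  have Npos: "real N = real d ^ 2 * real np" by (simp add: N_def)
  have Nne: "real N > 0" using np0 dd Npos by simp
  obtain FQ :: "(real^('r + 'r)^'d) set" and FB :: "(real^'d^('r + 'r)) set"
    where FQ: "finite FQ" "real (card FQ) \<le> 9 ^ (CARD('d) * CARD('r + 'r))"
      "\<And>Q. Q \<in> FQ \<Longrightarrow> Nop Q \<le> 1" "\<And>Q. Nop Q \<le> 1 \<Longrightarrow> \<exists>Q0\<in>FQ. Nop (Q - Q0) \<le> 1/4"
    and FB: "finite FB" "real (card FB) \<le> 9 ^ (CARD('d) * CARD('r + 'r))"
      "\<And>B. B \<in> FB \<Longrightarrow> norm B \<le> 1" "\<And>B. norm B \<le> 1 \<Longrightarrow> \<exists>B0\<in>FB. norm (B - B0) \<le> 1/4"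
    using nets[where 'k = "'r + 'r" and 'd = 'd] by metis
  define F where "F = FQ \<times> FB"
  define n where "n = 4 * d * r"
  have finF: "finite F" using FQ FB by (simp add: F_def)
  have cardF: "real (card F) \<le> 9 ^ n"
  proof -
    have "real (card F) = real (card FQ) * real (card FB)" by (simp add: F_def card_cartesian_product)
    also have "\<dots> \<le> 9 ^ (d * (2 * r)) * 9 ^ (d * (2 * r))"
      using FQ(2) FB(2) by (intro mult_mono) (auto simp: d_def r_def mult_2)
    also have "\<dots> = 9 ^ n" by (simp add: n_def flip: power_add)
    finally show ?thesis .
  qed
  define V where "V = real d ^ 2 * real np * \<beta> / 4"
  define L' where "L' = ln (9 ^ n) + ln (1 / \<delta>)"
  define s where "s = sqrt (2 * V * L')"
  have Vpos: "V > 0" using dd np0 bpos by (simp add: V_def)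
  have Lpos: "L' > 0"
  proof -
    have "ln (9 ^ n :: real) \<ge> 0" by simp
    moreover have "ln (1 / \<delta>) > 0" using \<delta> by simp
    ultimately show ?thesis unfolding L'_def by linarith
  qed
  have spos: "s > 0" using Vpos Lpos by (simp add: s_def)
  have s2: "s^2 / (2 * V) = L'" using Vpos Lpos by (simp add: s_def)
  define cf where "cf p i = A i \<bullet> (fst p ** snd p)" for p :: "(real^('r + 'r)^'d) \<times> (real^'d^('r + 'r))" and i
  define Bad where "Bad = (\<Union>p\<in>F. {x\<in>space M. s \<le> (\<Sum>i<N. cf p i * eps x i)})"
  have mf: "(\<lambda>x. \<Sum>i<N. cf p i * eps x i) \<in> borel_measurable M" for p
    by (intro borel_measurable_sum borel_measurable_times borel_measurable_const rv) auto
  have Bset: "{x\<in>space M. s \<le> (\<Sum>i<N. cf p i * eps x i)} \<in> sets M" for p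
    using mf[of p] by measurable
  have BadS: "Bad \<in> sets M" unfolding Bad_def using finF Bset by auto
  have tailp: "P.prob {x\<in>space M. s \<le> (\<Sum>i<N. cf p i * eps x i)} \<le> exp (- L')" if p: "p \<in> F" for p
  proof -
    obtain Q0 B0 where pq: "p = (Q0, B0)" "Q0 \<in> FQ" "B0 \<in> FB" using p by (auto simp: F_def)
    have rk0: "rank (Q0 ** B0) \<le> 2 * r"
      using rank_mul_le_left[of Q0 B0] rank_bound[of Q0] cardk by simp
    have nQB: "norm (Q0 ** B0) \<le> 1"
    proof -
      have "norm (Q0 ** B0) \<le> Nop Q0 * norm B0" by (rule norm_mm_le)
      also have "\<dots> \<le> 1 * 1" using FQ(3)[OF pq(2)] FB(3)[OF pq(3)]
        by (intro mult_mono) (auto simp: onorm_pos_le[OF matrix_vector_mul_bounded_linear])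
      finally show ?thesis by simp
    qed
    have "opnormsq A N (Q0 ** B0) / real N \<le> \<beta> / real d ^ 2 * (norm (Q0 ** B0))^2"
      using RW[OF rk0] by blast
    also have "\<dots> \<le> \<beta> / real d ^ 2 * 1"
      using nQB bpos dd by (intro mult_left_mono) (auto simp: power_le_one)
    finally have "opnormsq A N (Q0 ** B0) \<le> \<beta> / real d ^ 2 * real N"
      using Nne by (simp add: divide_le_eq)
    also have "\<dots> = real np * \<beta>" using dd by (simp add: Npos)
    finally have op: "opnormsq A N (Q0 ** B0) \<le> real np * \<beta>" .
    have var: "(real d / 2)^2 * (\<Sum>i<N. (cf p i)^2) \<le> V"
    proof -
      have "(\<Sum>i<N. (cf p i)^2) = opnormsq A N (Q0 ** B0)" by (simp add: cf_def pq opnormsq_def)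
      then have "(real d / 2)^2 * (\<Sum>i<N. (cf p i)^2) \<le> (real d / 2)^2 * (real np * \<beta>)"
        using op by (intro mult_left_mono) auto
      also have "\<dots> = V" by (simp add: V_def power_divide)
      finally show ?thesis .
    qed
    have "P.prob {x\<in>space M. s \<le> (\<Sum>i<N. cf p i * eps x i)} \<le> exp (- (s^2) / (2 * V))"
      by (rule P.subg_tail[OF rv indep subg var Vpos spos])
    also have "- (s^2) / (2 * V) = - L'" using s2 by simp
    finally show ?thesis .
  qed
  have probBad: "P.prob Bad \<le> \<delta>"
  proof -
    have "P.prob Bad \<le> (\<Sum>p\<in>F. P.prob {x\<in>space M. s \<le> (\<Sum>i<N. cf p i * eps x i)})"
      unfolding Bad_def by (rule measure_UNION_le[OF finF Bset])
    also have "\<dots> \<le> (\<Sum>p\<in>F. exp (- L'))" by (intro sum_mono tailp)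
    also have "\<dots> = real (card F) * exp (- L')" by simp
    also have "\<dots> \<le> 9 ^ n * exp (- L')" using cardF by (intro mult_right_mono) auto
    also have "9 ^ n * exp (- L') = \<delta>"
    proof -
      have "exp (- L') = exp (- ln (9 ^ n)) * exp (- ln (1 / \<delta>))"
        by (simp add: L'_def exp_add[symmetric])
      also have "\<dots> = (1 / 9 ^ n) * \<delta>" using \<delta> by (simp add: exp_minus divide_inverse mult.commute)
      finally show ?thesis by simp
    qed
    finally show ?thesis .
  qed
  define E where "E = space M - Bad"
  have ES: "E \<in> sets M" using BadS by (simp add: E_def)
  have mE: "measure M E \<ge> 1 - \<delta>"
    using P.prob_compl[OF BadS] probBad by (simp add: E_def)
  show ?thesis
  proof (intro bexI conjI ballI)
    show "E \<in> sets M" by (rule ES)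
    show "measure M E \<ge> 1 - \<delta>" by (rule mE)
    fix x assume xE: "x \<in> E"
    show "ell (Uhat x) Ug \<le> norm21 (Ug - Up)
        + norm21 (Up ** (procR (Uhat x) Up - procR (Uhat x) Ug))
        + 8 * real d * sqrt (2 * \<beta>) / ((3 * \<alpha> - 2 * \<beta>) * sigma_r Up)
          * sqrt (real d * (2 * real r * (2 * real d + 1) * ln (36 * sqrt 2) + ln (2 / \<delta>)) / real np)"
    proof -
      have xs: "x \<in> space M" and xB: "x \<notin> Bad" using xE by (auto simp: E_def)
      have good: "(\<Sum>i<N. cf p i * eps x i) < s" if "p \<in> F" for p
        using xs xB that unfolding Bad_def by force
      define Gx where "Gx = (\<Sum>i<N. eps x i *\<^sub>R A i)"
      have Ginner: "Gx \<bullet> Z = (\<Sum>i<N. (A i \<bullet> Z) * eps x i)" for Z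
        by (simp add: Gx_def inner_sum_left mult.commute)
      have hypG: "Gx \<bullet> (Q0 ** B0) \<le> s" if "Q0 \<in> FQ" "B0 \<in> FB" for Q0 B0
      proof -
        have "(Q0, B0) \<in> F" using that by (simp add: F_def)
        from good[OF this] show ?thesis by (simp add: Ginner cf_def)
      qed
      have supG: "Gx \<bullet> (Q ** B) \<le> 2 * s" if "Nop Q \<le> 1" "norm B \<le> 1"
        for Q :: "real^('r + 'r)^'d" and B :: "real^'d^('r + 'r)"
        by (rule sup_bound[OF FQ(3) FB(3) FQ(4) FB(4) hypG that])
      define Uh where "Uh = Uhat x"
      define D where "D = Uh ** transpose Uh - Up ** transpose Up"
      have rkD: "rank D \<le> CARD('r + 'r)" unfolding D_def by (rule rank_Delta)
      obtain Q :: "real^('r + 'r)^'d" and B :: "real^'d^('r + 'r)"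
        where QB: "D = Q ** B" "\<And>v. norm (Q *v v) \<le> norm v" "norm B = norm D"
        using decomp[OF rkD] by blast
      have NopQ: "Nop Q \<le> 1" by (rule onorm_le) (simp add: QB(2))
      have GD: "Gx \<bullet> D \<le> 2 * s * norm D"
      proof (cases "norm D = 0")
        case True then show ?thesis by simp
      next
        case False
        define B' where "B' = (1 / norm D) *\<^sub>R B"
        have "norm B' = 1" using False QB(3) by (simp add: B'_def)
        then have "Gx \<bullet> (Q ** B') \<le> 2 * s" using supG[OF NopQ] by simp
        moreover have "D = norm D *\<^sub>R (Q ** B')"
          using False by (simp add: QB(1) B'_def mm_scale)
        ultimately have "Gx \<bullet> D \<le> norm D * (2 * s)"
          by (metis inner_scaleR_right mult_left_mono norm_ge_zero)
        then show ?thesis by (simp add: mult.commute)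
      qed
      have basic: "opnormsq A N D \<le> 2 * (Gx \<bullet> D)"
      proof -
        have "loss A N (X x) Uh \<le> loss A N (X x) Up" unfolding Uh_def by (rule minim[OF xs])
        then have "(\<Sum>i<N. (X x i - A i \<bullet> (Uh ** transpose Uh))^2) \<le> (\<Sum>i<N. (X x i - A i \<bullet> (Up ** transpose Up))^2)"
          using Nne by (simp add: loss_def divide_le_cancel)
        moreover have "X x i - A i \<bullet> (Uh ** transpose Uh) = eps x i - A i \<bullet> D" for i
          by (simp add: X_def D_def inner_diff_right)
        moreover have "X x i - A i \<bullet> (Up ** transpose Up) = eps x i" for i
          by (simp add: X_def)
        ultimately have "(\<Sum>i<N. (eps x i - A i \<bullet> D)^2) \<le> (\<Sum>i<N. (eps x i)^2)" by simp
        then have "(\<Sum>i<N. (A i \<bullet> D)^2) \<le> 2 * (\<Sum>i<N. eps x i * (A i \<bullet> D))"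
          by (rule basic_ineq)
        then show ?thesis by (simp add: opnormsq_def Ginner mult.commute)
      qed
      have rkD2: "rank D \<le> 2 * r" using rkD cardk by simp
      have low: "\<alpha> * real np * (norm D)^2 \<le> opnormsq A N D"
      proof -
        have "\<alpha> / real d ^ 2 * (norm D)^2 \<le> opnormsq A N D / real N" using RW[OF rkD2] by blast
        then have "\<alpha> / real d ^ 2 * (norm D)^2 * real N \<le> opnormsq A N D"
          using Nne by (simp add: le_divide_eq)
        moreover have "\<alpha> / real d ^ 2 * (norm D)^2 * real N = \<alpha> * real np * (norm D)^2"
          using dd by (simp add: Npos)
        ultimately show ?thesis by simp
      qed
      have nD: "norm D \<le> 4 * s / (\<alpha> * real np)"
      proof (cases "norm D = 0")
        case True then show ?thesis using spos apos np0 by simp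
      next
        case False
        then have pos: "norm D > 0" by simp
        have "\<alpha> * real np * (norm D)^2 \<le> 4 * s * norm D" using low basic GD by linarith
        then have "(\<alpha> * real np * norm D) * norm D \<le> (4 * s) * norm D" by (simp add: power2_eq_square mult_ac)
        then have "\<alpha> * real np * norm D \<le> 4 * s" using pos by (simp add: mult_le_cancel_right)
        then show ?thesis using apos np0 by (simp add: le_divide_eq mult_ac)
      qed
      have rkU: "rank Up = CARD('r)" using rankUp by (simp add: r_def)
      define H where "H = Uh - Up ** procR Uh Up"
      have det: "(4/5) * (sigma_r Up)^2 * (norm H)^2 \<le> (norm D)^2"
        unfolding H_def D_def by (rule det_main[OF rkU])
      have sig: "sigma_r Up > 0" by (rule sigma_r_props(1)[OF rkU])
      have n21: "norm21 H \<le> sqrt (real d) * norm H" unfolding d_def by (rule norm21_frob)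
      have LL: "L' \<le> 2 * real r * (2 * real d + 1) * ln (36 * sqrt 2) + ln (2 / \<delta>)"
      proof -
        have "ln (9 ^ n :: real) = real n * ln 9" by (simp add: ln_realpow)
        also have "\<dots> = (4 * real d * real r) * ln 9" by (simp add: n_def)
        also have "\<dots> \<le> (2 * real r * (2 * real d + 1)) * ln (36 * sqrt 2)"
        proof (rule mult_mono)
          show "4 * real d * real r \<le> 2 * real r * (2 * real d + 1)" using r1 by (simp add: algebra_simps)
          have "(9::real) \<le> 36 * sqrt 2"
          proof -
            have "(1::real) \<le> sqrt 2" by simp
            then show ?thesis by linarith
          qed
          then show "ln 9 \<le> ln (36 * sqrt 2)" by simp
        qed (use r1 d1 in auto)
        finally have a: "ln (9 ^ n :: real) \<le> 2 * real r * (2 * real d + 1) * ln (36 * sqrt 2)" .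
        have b: "ln (1 / \<delta>) \<le> ln (2 / \<delta>)" using \<delta> by (simp add: divide_right_mono)
        show ?thesis using a b by (simp add: L'_def)
      qed
      have fin: "norm21 H \<le> 8 * real d * sqrt (2 * \<beta>) / ((3 * \<alpha> - 2 * \<beta>) * sigma_r Up)
          * sqrt (real d * (2 * real r * (2 * real d + 1) * ln (36 * sqrt 2) + ln (2 / \<delta>)) / real np)"
      proof (rule final_arith[where s = s and L' = L' and nD = "norm D"])
        show "real d \<ge> 1" by (rule d1)
        show "real np > 0" using np0 by simp
        show "\<alpha> > 0" by (rule apos)
        show "3 * \<alpha> - 2 * \<beta> > 0" using ab by simp
        show "3 * \<alpha> - 2 * \<beta> \<le> \<alpha>" using aleb by simp
        show "\<beta> > 0" by (rule bpos)
        show "sigma_r Up > 0" by (rule sig)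
        show "L' \<ge> 0" using Lpos by simp
        show "s = sqrt (2 * (real d ^ 2 * real np * \<beta> / 4) * L')" by (simp add: s_def V_def)
      qed (use LL nD det n21 in auto)
      have "ell Uh Ug \<le> norm21 (Ug - Up) + norm21 (Up ** (procR Uh Up - procR Uh Ug)) + norm21 H"
        unfolding H_def by (rule ell_triangle)
      then show ?thesis using fin by (simp add: Uh_def)
    qed
  qed
qed

end
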